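(* Let $R$ be a commutative $\mathbb{Q}$-algebra and let $\varphi\colon \varOmega^U_*\to R$ be a complex genus with exponent $f(x)=x+\ldots\in R[[x]]$. Suppose that (i) $\varphi$ is $T^2$-rigid on the sphere $S^6=G_2/SU(3)$ equipped with its $T^2$-invariant almost complex structure (where $T^2\subset G_2$ is the maximal torus), (ii) $\varphi([S^6])=0$, and (iii) $\varphi$ is $T^5$-rigid on the $10$-dimensional omnioriented quasitoric manifold $\widetilde L(2,3)$ described in the context. Then there exist $\alpha,\delta,\varepsilon\in R$ such that $f(x)=e^{\alpha x}\,\mathrm{sn}(x)$, where $\mathrm{sn}(x)=x+\ldots\in R[[x]]$ is the unique power series satisfying $(\mathrm{sn}'(x))^2=1-2\delta\,\mathrm{sn}^2(x)+\varepsilon\,\mathrm{sn}^4(x)$; that is, $\varphi$ is the Krichever genus with parameter $b_2=0$.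
   Context: A complex genus is a ring homomorphism $\varphi\colon\varOmega^U_*\to R$ from the complex bordism ring. For $R$ a $\mathbb{Q}$-algebra, complex genera correspond bijectively to power series $f(x)=x+\ldots\in R[[x]]$ (the exponent): $\varphi([M])=\langle P_f(TM),[M]\rangle$ where $P_f$ is the multiplicative characteristic class obtained from $\prod_i x_i/f(x_i)$ in terms of Chern roots. Every genus has a universal $T^k$-equivariant extension $\varphi^T\colon\varOmega^{U:T^k}_*\to R[[x_1,\dots,x_k]]$ on bordism of stably complex manifolds with $T^k$-action and invariant stably complex structure, whose constant term is $\varphi([M])$; $\varphi$ is $T^k$-rigid on $M$ if $\varphi^T([M])$ equals its constant term $\varphi([M])$. When the fixed points of $M^{2n}$ are isolated, $\varphi^T([M])=\sum_{p\in M^T}\sigma(p)\prod_{i=1}^n 1/f(\langle w_i(p),x\rangle)$, where $w_1(p),\dots,w_n(p)\in\mathbb{Z}^k$ are the weights of the tangent representation at $p$, $\sigma(p)=\pm1$ is the sign comparing the orientation of $T_pM$ induced by the stably complex structure with that from the complex representation, and $\langle w,x\rangle=\sum_j w_jx_j$. Quasitoric manifold: given a simple $n$-polytope $P\subset\mathbb{R}^n$ with facets $F_1,\dots,F_m$ (inward normals $a_j$) and an integer $n\times m$ matrix $\Lambda$ such that for every vertex $v=F_{j_1}\cap\dots\cap F_{j_n}$ the submatrix $\Lambda_v$ of columns $j_1,\dots,j_n$ has determinant $\pm1$, there is an omnioriented quasitoric $2n$-manifold $M(P,\Lambda)$ with a $T^n$-action and invariant stably complex structure; its fixed points correspond to vertices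 $v$, with weights the rows of $\Lambda_v^{-1}$ and sign $\mathrm{sign}(\det\Lambda_v\cdot\det(a_{j_1},\dots,a_{j_n}))$. $\widetilde L(2,3)=M(P,\Lambda)$ where $P=\Delta^2\times\Delta^3\subset\mathbb{R}^5$ is given by $x_1\ge0,x_2\ge0,x_1+x_2\le1,x_3\ge0,x_4\ge0,x_5\ge0,x_3+x_4+x_5\le1$, with facets ordered so that the inward normals are $a_1=e_1,a_2=e_2,a_3=-e_1-e_2,a_4=e_3,a_5=e_4,a_6=e_5,a_7=-e_3-e_4-e_5$, and $\Lambda=\begin{pmatrix}1&0&1&0&0&0&0\\0&1&-1&0&0&0&0\\0&0&1&1&0&0&1\\0&0&0&0&1&0&-1\\0&0&0&0&0&1&1\end{pmatrix}$. It is an $SU$-manifold (first Chern class zero). *)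

theory Defs
  imports "HOL-Computational_Algebra.Formal_Power_Series"
begin

text \<open>A commutative ring is a Q-algebra (necessarily in a unique way) iff every
  positive integer is invertible in it.\<close>
definition Q_algebra :: "'a::comm_ring_1 itself \<Rightarrow> bool" where
  "Q_algebra _ \<longleftrightarrow> (\<forall>n::nat. n > 0 \<longrightarrow> (\<exists>y::'a. of_nat n * y = 1))"

definition nat_inv :: "nat \<Rightarrow> 'a::comm_ring_1" where
  "nat_inv n = (THE y. of_nat n * y = 1)"

definition rexp :: "'a::comm_ring_1 \<Rightarrow> 'a fps" where
  "rexp \<alpha> = Abs_fps (\<lambda>n. \<alpha> ^ n * nat_inv (fact n))"

text \<open>A k-variate series is a function on exponent vectors m :: nat \<Rightarrow> nat; only
  exponent vectors supported in {..<k} are meaningful.\<close>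
type_synonym 'a mps = "(nat \<Rightarrow> nat) \<Rightarrow> 'a"

definition supp_in :: "nat \<Rightarrow> (nat \<Rightarrow> nat) \<Rightarrow> bool" where
  "supp_in k m \<longleftrightarrow> (\<forall>i\<ge>k. m i = 0)"

definition mdeg :: "nat \<Rightarrow> (nat \<Rightarrow> nat) \<Rightarrow> nat" where
  "mdeg k m = (\<Sum>i<k. m i)"

definition mmult :: "nat \<Rightarrow> 'a::comm_ring_1 mps \<Rightarrow> 'a mps \<Rightarrow> 'a mps" where
  "mmult k a b = (\<lambda>m. \<Sum>n\<in>{n. supp_in k n \<and> (\<forall>i<k. n i \<le> m i)}. a n * b (\<lambda>i. m i - n i))"

definition mconst :: "nat \<Rightarrow> 'a::comm_ring_1 \<Rightarrow> 'a mps" where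
  "mconst k c = (\<lambda>m. if (\<forall>i<k. m i = 0) then c else 0)"

primrec mprodL :: "nat \<Rightarrow> 'a::comm_ring_1 mps list \<Rightarrow> 'a mps" where
  "mprodL k [] = mconst k 1"
| "mprodL k (a # as) = mmult k a (mprodL k as)"

text \<open>Substitution of the linear form <w,x> = sum_j w_j x_j into a univariate series f:
  f(<w,x>) = sum_d f_d <w,x>^d, and the coefficient of x^m in <w,x>^|m| is the multinomial
  coefficient |m|!/prod_j m_j! times prod_j w_j^(m_j).\<close>
definition linsub :: "nat \<Rightarrow> 'a::comm_ring_1 fps \<Rightarrow> (nat \<Rightarrow> int) \<Rightarrow> 'a mps" where
  "linsub k f w = (\<lambda>m. fps_nth f (mdeg k m)
      * of_nat (fact (mdeg k m) div (\<Prod>i<k. fact (m i)))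
      * (\<Prod>i<k. of_int (w i) ^ m i))"

text \<open>Fixed point data of a T^k-manifold with isolated fixed points: a list of
  fixed points p, each given by its sign sigma(p) and the list of its tangent weights
  w_1(p),...,w_n(p) in Z^k (as functions nat \<Rightarrow> int, relevant on {..<k}).\<close>
type_synonym fpdata = "(int \<times> (nat \<Rightarrow> int) list) list"

text \<open>\<open>equiv_genus_eq k f pts c\<close> states the identity
    sum_p sigma(p) prod_i 1/f(<w_i(p),x>) = c
  in (the localisation of) R[[x_1,...,x_k]], written with cleared denominators:
  multiplying by D = prod_q prod_i f(<w_i(q),x>) (a non-zero-divisor) it reads
    sum_p sigma(p) prod_{q \<noteq> p} prod_i f(<w_i(q),x>) = c * D .\<close>
definition fp_den :: "nat \<Rightarrow> 'a::comm_ring_1 fps \<Rightarrow> fpdata \<Rightarrow> nat \<Rightarrow> 'a mps" where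
  "fp_den k f pts j = mprodL k (map (linsub k f) (snd (pts ! j)))"

definition equiv_genus_eq :: "nat \<Rightarrow> 'a::comm_ring_1 fps \<Rightarrow> fpdata \<Rightarrow> 'a \<Rightarrow> bool" where
  "equiv_genus_eq k f pts c \<longleftrightarrow>
     (\<forall>m. supp_in k m \<longrightarrow>
        (\<Sum>j<length pts. of_int (fst (pts ! j))
            * mprodL k (map (fp_den k f pts) (filter (\<lambda>q. q \<noteq> j) [0..<length pts])) m)
        = c * mprodL k (map (fp_den k f pts) [0..<length pts]) m)"

text \<open>Rigidity: the equivariant genus equals its constant term, i.e. it is a constant.
  Its constant term is the non-equivariant genus, so for a rigid genus
  phi([M]) is that constant.\<close>
definition rigid_on :: "nat \<Rightarrow> 'a::comm_ring_1 fps \<Rightarrow> fpdata \<Rightarrow> bool" where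
  "rigid_on k f pts \<longleftrightarrow> (\<exists>c. equiv_genus_eq k f pts c)"

definition wv :: "int list \<Rightarrow> nat \<Rightarrow> int" where
  "wv xs = (\<lambda>i. if i < length xs then xs ! i else 0)"

text \<open>S^6 = G_2/SU(3) with its G_2-invariant almost complex structure and the maximal
  torus T^2 \<subseteq> SU(3) \<subseteq> G_2, parametrised as diag(t_1, t_2, (t_1 t_2)^(-1)).
  Fixed points: the two poles \<plusminus>e; T_e S^6 = C^3 (standard SU(3)-representation),
  T_(-e) S^6 its conjugate. Both signs are +1 (genuine almost complex structure).\<close>
definition S6_data :: fpdata where
  "S6_data = [ (1, [wv [1,0], wv [0,1], wv [-1,-1]]),
               (1, [wv [-1,0], wv [0,-1], wv [1,1]]) ]"

definition Lam :: "nat \<Rightarrow> nat \<Rightarrow> int" where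
  "Lam i j = [[1,0,1,0,0,0,0],[0,1,-1,0,0,0,0],[0,0,1,1,0,0,1],[0,0,0,0,1,0,-1],[0,0,0,0,0,1,1]] ! i ! j"

text \<open>Inward normals a_1..a_7 (0-indexed): normal j, coordinate r.\<close>
definition normal :: "nat \<Rightarrow> nat \<Rightarrow> int" where
  "normal j r = [[1,0,0,0,0],[0,1,0,0,0],[-1,-1,0,0,0],[0,0,1,0,0],[0,0,0,1,0],[0,0,0,0,1],[0,0,-1,-1,-1]] ! j ! r"

text \<open>The 12 vertices of Delta^2 x Delta^3, as lists of the (0-indexed) facets through them
  (ordered increasingly), together with the fixed point data: sign
  sign(det Lambda_v * det(a_(j_1),...,a_(j_5))) and the weights = rows of Lambda_v^(-1)
  (computed by exact rational arithmetic; the weights are certified in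
  lemma \<open>Ltilde_weights_inverse\<close> below).\<close>
definition Ltilde_vertices :: "nat list list" where
  "Ltilde_vertices =
    [[0,1,3,4,5],[0,1,3,4,6],[0,1,3,5,6],[0,1,4,5,6],
     [0,2,3,4,5],[0,2,3,4,6],[0,2,3,5,6],[0,2,4,5,6],
     [1,2,3,4,5],[1,2,3,4,6],[1,2,3,5,6],[1,2,4,5,6]]"

definition Ltilde_weight_rows :: "int list list list" where
  "Ltilde_weight_rows =
    [ [[1,0,0,0,0],[0,1,0,0,0],[0,0,1,0,0],[0,0,0,1,0],[0,0,0,0,1]],
      [[1,0,0,0,0],[0,1,0,0,0],[0,0,1,0,-1],[0,0,0,1,1],[0,0,0,0,1]],
      [[1,0,0,0,0],[0,1,0,0,0],[0,0,1,1,0],[0,0,0,1,1],[0,0,0,-1,0]],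
      [[1,0,0,0,0],[0,1,0,0,0],[0,0,1,1,0],[0,0,-1,0,1],[0,0,1,0,0]],
      [[1,1,0,0,0],[0,-1,0,0,0],[0,1,1,0,0],[0,0,0,1,0],[0,0,0,0,1]],
      [[1,1,0,0,0],[0,-1,0,0,0],[0,1,1,0,-1],[0,0,0,1,1],[0,0,0,0,1]],
      [[1,1,0,0,0],[0,-1,0,0,0],[0,1,1,1,0],[0,0,0,1,1],[0,0,0,-1,0]],
      [[1,1,0,0,0],[0,-1,0,0,0],[0,1,1,1,0],[0,-1,-1,0,1],[0,1,1,0,0]],
      [[1,1,0,0,0],[1,0,0,0,0],[-1,0,1,0,0],[0,0,0,1,0],[0,0,0,0,1]],
      [[1,1,0,0,0],[1,0,0,0,0],[-1,0,1,0,-1],[0,0,0,1,1],[0,0,0,0,1]],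
      [[1,1,0,0,0],[1,0,0,0,0],[-1,0,1,1,0],[0,0,0,1,1],[0,0,0,-1,0]],
      [[1,1,0,0,0],[1,0,0,0,0],[-1,0,1,1,0],[1,0,-1,0,1],[-1,0,1,0,0]] ]"

definition Ltilde_signs :: "int list" where
  "Ltilde_signs = [1,-1,1,-1,1,-1,1,-1,-1,1,-1,1]"

definition Ltilde_data :: fpdata where
  "Ltilde_data = map (\<lambda>(s, ws). (s, map wv ws)) (zip Ltilde_signs Ltilde_weight_rows)"

lemma Ltilde_weights_inverse:
  "\<forall>v<12. \<forall>i<5. \<forall>j<5.
     (\<Sum>r<5. Lam i (Ltilde_vertices ! v ! r) * (Ltilde_weight_rows ! v ! r ! j))
       = (if i = j then 1 else 0)"
proof -
  have all5: "\<And>P. (\<forall>i<(5::nat). P i) \<longleftrightarrow> P 0 \<and> P 1 \<and> P 2 \<and> P 3 \<and> P 4"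
    by (auto simp: less_Suc_eq numeral_eq_Suc)
  have all12: "\<And>P. (\<forall>i<(12::nat). P i) \<longleftrightarrow> (\<forall>i\<in>set [0..<12]. P i)"
    by auto
  show ?thesis
    unfolding all5 all12
    by (simp add: Lam_def Ltilde_vertices_def Ltilde_weight_rows_def upt_rec numeral_eq_Suc)
qed

text \<open>sn(x) = x + ... with sn'(x)^2 = 1 - 2 delta sn(x)^2 + epsilon sn(x)^4
  (such a series is unique over a Q-algebra).\<close>
definition is_sn :: "'a::comm_ring_1 \<Rightarrow> 'a \<Rightarrow> 'a fps \<Rightarrow> bool" where
  "is_sn \<delta> \<epsilon> s \<longleftrightarrow> fps_nth s 0 = 0 \<and> fps_nth s 1 = 1 \<and>
     (fps_deriv s)\<^sup>2 = 1 - fps_const (2 * \<delta>) * s\<^sup>2 + fps_const \<epsilon> * s ^ 4"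

end

theory Submission
  imports Defs
begin

unbundle fps_syntax

lemma fc_sum: "fps_const (sum f A) = (\<Sum>x\<in>A. fps_const (f x))"
  by (induction A rule: infinite_finite_induct) (auto simp del: fps_const_add simp: fps_const_add[symmetric])

definition MS :: "nat \<Rightarrow> nat \<Rightarrow> (nat \<Rightarrow> nat) set" where
  "MS k N = {m. supp_in k m \<and> mdeg k m = N}"

definition BX :: "nat \<Rightarrow> nat \<Rightarrow> (nat \<Rightarrow> nat) set" where
  "BX k N = {m. supp_in k m \<and> (\<forall>i<k. m i \<le> N)}"

lemma finite_BX: "finite (BX k N)"
proof (induction k)
  case 0
  have "BX 0 N = {\<lambda>_. 0}" by (auto simp: BX_def supp_in_def)
  then show ?case by simp
next
  case (Suc k)
  have "BX (Suc k) N \<subseteq> (\<lambda>(j,m). m(k:=j)) ` ({..N} \<times> BX k N)"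
  proof
    fix m assume m: "m \<in> BX (Suc k) N"
    have "m = (m(k:=0))(k := m k)" by simp
    moreover have "m(k:=0) \<in> BX k N" using m
      by (auto simp: BX_def supp_in_def)
    moreover have "m k \<le> N" using m by (auto simp: BX_def)
    ultimately show "m \<in> (\<lambda>(j,m). m(k:=j)) ` ({..N} \<times> BX k N)"
      by (metis (no_types, lifting) SigmaI atMost_iff case_prod_conv image_eqI)
  qed
  then show ?case using Suc by (meson finite_SigmaI finite_atMost finite_imageI finite_subset)
qed

lemma MS_sub_BX: "MS k N \<subseteq> BX k N"
proof
  fix m assume "m \<in> MS k N"
  then have "supp_in k m" "(\<Sum>i<k. m i) = N" by (auto simp: MS_def mdeg_def)
  moreover have "\<forall>i<k. m i \<le> (\<Sum>i<k. m i)"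
    by (intro allI impI member_le_sum) auto
  ultimately show "m \<in> BX k N" by (auto simp: BX_def)
qed

lemma finite_MS: "finite (MS k N)"
  using finite_subset[OF MS_sub_BX finite_BX] .

lemma finite_mmult_set: "finite {n. supp_in k n \<and> (\<forall>i<k. n i \<le> m i)}"
proof -
  have "{n. supp_in k n \<and> (\<forall>i<k. n i \<le> m i)} \<subseteq> BX k (\<Sum>i<k. m i)"
    by (auto simp: BX_def intro: order_trans[OF _ member_le_sum])
  then show ?thesis using finite_BX finite_subset by blast
qed

definition spec :: "nat \<Rightarrow> (nat \<Rightarrow> 'a::comm_ring_1 fps) \<Rightarrow> 'a mps \<Rightarrow> 'a fps fps" where
  "spec k v a = Abs_fps (\<lambda>N. \<Sum>m\<in>MS k N. fps_const (a m) * (\<Prod>i<k. v i ^ m i))"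

lemma spec_nth: "spec k v a $ N = (\<Sum>m\<in>MS k N. fps_const (a m) * (\<Prod>i<k. v i ^ m i))"
  by (simp add: spec_def)

lemma spec_cong:
  assumes "\<And>m. supp_in k m \<Longrightarrow> a m = b m"
  shows "spec k v a = spec k v b"
  unfolding spec_def using assms by (auto simp: MS_def intro!: fps_ext sum.cong)

lemma spec_add: "spec k v (\<lambda>m. a m + b m) = spec k v a + spec k v b"
  by (rule fps_ext) (simp add: spec_nth fps_const_add[symmetric] distrib_right sum.distrib del: fps_const_add)

lemma spec_scal: "spec k v (\<lambda>m. c * a m) = fps_const (fps_const c) * spec k v a"
  by (rule fps_ext) (simp add: spec_nth fps_const_mult[symmetric] sum_distrib_left mult.assoc del: fps_const_mult)

lemma spec_sum: "spec k v (\<lambda>m. \<Sum>j\<in>J. a j m) = (\<Sum>j\<in>J. spec k v (a j))"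
proof (induction J rule: infinite_finite_induct)
  case (infinite A)
  then show ?case by (simp add: spec_def fps_eq_iff)
next
  case empty
  then show ?case by (simp add: spec_def fps_eq_iff)
next
  case (insert x F)
  then show ?case using spec_add[of k v "a x" "\<lambda>m. \<Sum>j\<in>F. a j m"] by simp
qed

lemma MS_0: "MS 0 N = (if N = 0 then {\<lambda>_. 0} else {})"
  by (auto simp: MS_def supp_in_def mdeg_def)

lemma spec_mconst: "spec k v (mconst k c) = fps_const (fps_const c)"
proof (rule fps_ext)
  fix N
  show "spec k v (mconst k c) $ N = fps_const (fps_const c) $ N"
  proof (cases "N = 0")
    case True
    have "MS k 0 = {\<lambda>_. 0}"
      by (auto simp: MS_def supp_in_def mdeg_def fun_eq_iff) (metis not_le lessThan_iff)
    then show ?thesis using True by (simp add: spec_nth mconst_def)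
  next
    case False
    have "\<And>m. m \<in> MS k N \<Longrightarrow> mconst k c m = 0"
      using False by (auto simp: MS_def mconst_def mdeg_def)
    then show ?thesis using False by (simp add: spec_nth)
  qed
qed

definition mminus :: "(nat \<Rightarrow> nat) \<Rightarrow> (nat \<Rightarrow> nat) \<Rightarrow> nat \<Rightarrow> nat" where
  "mminus p n = (\<lambda>i. p i - n i)"
definition mplus :: "(nat \<Rightarrow> nat) \<Rightarrow> (nat \<Rightarrow> nat) \<Rightarrow> nat \<Rightarrow> nat" where
  "mplus p n = (\<lambda>i. p i + n i)"

lemma spec_mult: "spec k v (mmult k a b) = spec k v a * spec k v b"
proof (rule fps_ext)
  fix N
  define V where "V m = (\<Prod>i<k. v i ^ m i)" for m
  define D where "D p = {n. supp_in k n \<and> (\<forall>i<k. n i \<le> p i)}" for p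
  define S where "S = (SIGMA p:MS k N. D p)"
  define T where "T = (SIGMA i:{0..N}. SIGMA m:MS k i. MS k (N - i))"
  define g where "g = (\<lambda>(p,n). fps_const (a n) * fps_const (b (mminus p n)) * V p)"
  define h where "h = (\<lambda>(i::nat,m,n). fps_const (a m) * fps_const (b n) * (V m * V n))"
  have finD: "finite (D p)" for p unfolding D_def by (rule finite_mmult_set)
  have "spec k v (mmult k a b) $ N = (\<Sum>p\<in>MS k N. \<Sum>n\<in>D p. fps_const (a n) * fps_const (b (mminus p n)) * V p)"
    by (simp add: spec_nth mmult_def V_def D_def mminus_def fc_sum sum_distrib_right
          fps_const_mult[symmetric] del: fps_const_mult)
  also have "\<dots> = sum g S"
    unfolding S_def g_def by (subst sum.Sigma) (auto simp: finite_MS finD)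
  also have "\<dots> = sum h T"
  proof (rule sum.reindex_bij_witness[where i = "\<lambda>(i,m,n). (mplus m n, m)" and j = "\<lambda>(p,n). (mdeg k n, n, mminus p n)"])
    fix pn assume "pn \<in> S"
    then obtain p n where pn: "pn = (p,n)" "p \<in> MS k N" "n \<in> D p" unfolding S_def by auto
    then have sp: "supp_in k p" "mdeg k p = N" and sn: "supp_in k n" and le: "\<forall>i<k. n i \<le> p i"
      by (auto simp: MS_def D_def)
    have eqp: "mplus n (mminus p n) = p"
      unfolding mplus_def mminus_def fun_eq_iff
    proof
      fix i show "n i + (p i - n i) = p i"
      proof (cases "i < k")
        case True with le show ?thesis by auto
      next
        case False with sn show ?thesis by (simp add: supp_in_def)
      qed
    qed
    then show "(case case pn of (p, n) \<Rightarrow> (mdeg k n, n, mminus p n) of (i, m, n) \<Rightarrow> (mplus m n, m)) = pn"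
      using pn by simp
    have mle: "mdeg k n \<le> N" using sp le unfolding mdeg_def by (metis sum_mono lessThan_iff)
    have md: "mdeg k (mminus p n) = N - mdeg k n"
      using sp le unfolding mdeg_def mminus_def MS_def by (subst sum_subtractf_nat) auto
    have sm: "supp_in k (mminus p n)" using sp sn by (auto simp: supp_in_def mminus_def)
    show "(case pn of (p, n) \<Rightarrow> (mdeg k n, n, mminus p n)) \<in> T"
      using pn sn mle md sm by (auto simp: T_def MS_def)
    have "V n * V (mminus p n) = V p"
      unfolding V_def mminus_def using le
      by (simp add: prod.distrib[symmetric] power_add[symmetric])
    then show "h (case pn of (p, n) \<Rightarrow> (mdeg k n, n, mminus p n)) = g pn"
      using pn by (simp add: h_def g_def)
  next
    fix imn assume "imn \<in> T"
    then obtain i m n where imn: "imn = (i,m,n)" "i \<le> N" "m \<in> MS k i" "n \<in> MS k (N - i)"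
      unfolding T_def by auto
    then have sm: "supp_in k m" "mdeg k m = i" and sn: "supp_in k n" "mdeg k n = N - i"
      by (auto simp: MS_def)
    have "mminus (mplus m n) m = n" by (simp add: mminus_def mplus_def)
    then show "(case case imn of (i, m, n) \<Rightarrow> (mplus m n, m) of (p, n) \<Rightarrow> (mdeg k n, n, mminus p n)) = imn"
      using imn sm by simp
    have "mdeg k (mplus m n) = N" using sm sn imn(2) by (simp add: mdeg_def mplus_def sum.distrib)
    moreover have "supp_in k (mplus m n)" using sm sn by (simp add: supp_in_def mplus_def)
    ultimately show "(case imn of (i, m, n) \<Rightarrow> (mplus m n, m)) \<in> S"
      using imn sm by (auto simp: S_def MS_def D_def mplus_def)
  qed
  also have "\<dots> = (\<Sum>i=0..N. \<Sum>mn\<in>MS k i \<times> MS k (N-i). h (i, mn))"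
    unfolding T_def using sum.Sigma[of "{0..N}" "\<lambda>i. MS k i \<times> MS k (N-i)" "\<lambda>i mn. h (i,mn)"]
    by (simp add: finite_MS)
  also have "\<dots> = (\<Sum>i=0..N. \<Sum>m\<in>MS k i. \<Sum>n\<in>MS k (N-i). fps_const (a m) * fps_const (b n) * (V m * V n))"
    by (simp add: sum.cartesian_product h_def)
  also have "\<dots> = (spec k v a * spec k v b) $ N"
    by (simp add: fps_mult_nth spec_nth V_def sum_product mult.assoc mult.left_commute fps_const_mult[symmetric] del: fps_const_mult)
  finally show "spec k v (mmult k a b) $ N = (spec k v a * spec k v b) $ N" .
qed

lemma prod_fact_dvd: fixes k :: nat shows "(\<Prod>i<k. fact (m i)) dvd (fact (\<Sum>i<k. m i) :: nat)"
proof (induction k)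
  case 0 then show ?case by simp
next
  case (Suc k)
  have "(\<Prod>i<Suc k. fact (m i)) = (\<Prod>i<k. fact (m i)) * (fact (m k) :: nat)" by simp
  also have "\<dots> dvd fact (\<Sum>i<k. m i) * fact (m k)" using Suc by (simp add: mult_dvd_mono)
  also have "\<dots> dvd fact ((\<Sum>i<k. m i) + m k)" by (rule fact_fact_dvd_fact)
  finally show ?case by simp
qed

lemma fact_div_lemma:
  fixes D :: nat
  assumes "j \<le> N" "D dvd fact (N - j)"
  shows "fact N div (D * fact j) = (N choose j) * (fact (N - j) div D)"
proof -
  obtain q where q: "fact (N - j) = D * q" using assms(2) by blast
  have D0: "D > 0" using q by (metis fact_nonzero mult_is_0 neq0_conv)
  have "fact N = fact j * fact (N - j) * (N choose j)" using binomial_fact_lemma[OF assms(1)] by simp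
  also have "\<dots> = (D * fact j) * (q * (N choose j))" using q by (simp add: ac_simps)
  finally have "fact N div (D * fact j) = q * (N choose j)" using D0 by simp
  moreover have "fact (N - j) div D = q" using q D0 by simp
  ultimately show ?thesis by simp
qed

lemma multinomial:
  fixes c :: "nat \<Rightarrow> 'b::comm_ring_1"
  shows "(\<Sum>i<k. c i) ^ N = (\<Sum>m\<in>MS k N. of_nat (fact N div (\<Prod>i<k. fact (m i))) * (\<Prod>i<k. c i ^ m i))"
proof (induction k arbitrary: N)
  case 0
  then show ?case by (cases N) (auto simp: MS_0)
next
  case (Suc k)
  define A where "A = (\<Sum>i<k. c i)"
  define V where "V m = (\<Prod>i<k. c i ^ m i)" for m
  define mc where "mc n m = (of_nat (fact n div (\<Prod>i<k. fact (m i))) :: 'b)" for n m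
  define S where "S = (SIGMA j:{..N}. MS k (N - j))"
  define g where "g = (\<lambda>(j,m). of_nat (N choose j) * c k ^ j * (mc (N - j) m * V m))"
  have "(\<Sum>i<Suc k. c i) ^ N = (c k + A) ^ N" by (simp add: A_def add.commute)
  also have "\<dots> = (\<Sum>j\<le>N. of_nat (N choose j) * c k ^ j * A ^ (N - j))" by (rule binomial_ring)
  also have "\<dots> = (\<Sum>j\<le>N. \<Sum>m\<in>MS k (N - j). of_nat (N choose j) * c k ^ j * (mc (N - j) m * V m))"
    by (simp add: A_def Suc mc_def V_def sum_distrib_left)
  also have "\<dots> = sum g S" unfolding S_def g_def
    using sum.Sigma[of "{..N}" "\<lambda>j. MS k (N - j)" "\<lambda>j m. of_nat (N choose j) * c k ^ j * (mc (N - j) m * V m)"]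
    by (simp add: finite_MS)
  also have "\<dots> = (\<Sum>m\<in>MS (Suc k) N. of_nat (fact N div (\<Prod>i<Suc k. fact (m i))) * (\<Prod>i<Suc k. c i ^ m i))"
  proof (rule sum.reindex_bij_witness[where j = "\<lambda>(j,m). m(k:=j)" and i = "\<lambda>m. (m k, m(k:=0))"])
    fix jm assume "jm \<in> S"
    then obtain j m where jm: "jm = (j,m)" "j \<le> N" "m \<in> MS k (N - j)" unfolding S_def by auto
    then have sm: "supp_in k m" "(\<Sum>i<k. m i) = N - j" by (auto simp: MS_def mdeg_def)
    then have mk: "m k = 0" by (simp add: supp_in_def)
    show "(case case jm of (j, m) \<Rightarrow> m(k := j) of m \<Rightarrow> (m k, m(k := 0))) = jm"
      using jm mk by (simp add: fun_upd_idem)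
    have s2: "(\<Sum>i<k. (m(k:=j)) i) = (\<Sum>i<k. m i)" by (intro sum.cong) auto
    show "(case jm of (j, m) \<Rightarrow> m(k := j)) \<in> MS (Suc k) N"
      using jm sm s2 by (auto simp: MS_def mdeg_def supp_in_def)
    have p1: "(\<Prod>i<k. fact ((m(k:=j)) i)) = (\<Prod>i<k. fact (m i) :: nat)" by (intro prod.cong) auto
    have p2: "(\<Prod>i<k. c i ^ (m(k:=j)) i) = V m" unfolding V_def by (intro prod.cong) auto
    have dv: "(\<Prod>i<k. fact (m i)) dvd (fact (N - j) :: nat)" using prod_fact_dvd[where k=k and m=m] sm by simp
    have "fact N div (\<Prod>i<Suc k. fact ((m(k:=j)) i)) = (N choose j) * (fact (N - j) div (\<Prod>i<k. fact (m i)))"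
      using p1 fact_div_lemma[OF jm(2) dv] by simp
    then show "of_nat (fact N div (\<Prod>i<Suc k. fact ((case jm of (j, m) \<Rightarrow> m(k := j)) i))) *
         (\<Prod>i<Suc k. c i ^ (case jm of (j, m) \<Rightarrow> m(k := j)) i) = g jm"
      using jm p2 by (simp add: g_def mc_def ac_simps)
  next
    fix m assume m: "m \<in> MS (Suc k) N"
    then have sm: "supp_in (Suc k) m" "(\<Sum>i<k. m i) + m k = N" by (auto simp: MS_def mdeg_def)
    show "(case (m k, m(k := 0)) of (j, m) \<Rightarrow> m(k := j)) = m" by simp
    have s2: "(\<Sum>i<k. (m(k:=0)) i) = (\<Sum>i<k. m i)" by (intro sum.cong) auto
    have "supp_in k (m(k:=0))" using sm by (auto simp: supp_in_def)
    then show "(m k, m(k := 0)) \<in> S" using sm s2 by (auto simp: S_def MS_def mdeg_def)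
  qed
  finally show ?case .
qed

lemma fc_prod: "fps_const (prod f A) = (\<Prod>x\<in>A. fps_const (f x))"
  by (induction A rule: infinite_finite_induct) (auto simp del: fps_const_mult simp: fps_const_mult[symmetric])

definition Fac :: "'a::comm_ring_1 fps \<Rightarrow> 'a fps \<Rightarrow> 'a fps fps" where
  "Fac L a = Abs_fps (\<lambda>N. fps_const (a $ N) * L ^ N)"

lemma Fac_nth: "Fac L a $ N = fps_const (a $ N) * L ^ N"
  by (simp add: Fac_def)

lemma spec_linsub: "spec k v (linsub k f w) = Fac (\<Sum>i<k. of_int (w i) * v i) f"
proof (rule fps_ext)
  fix N
  have "spec k v (linsub k f w) $ N = (\<Sum>m\<in>MS k N. fps_const (f $ N) *
      (of_nat (fact N div (\<Prod>i<k. fact (m i))) * (\<Prod>i<k. (of_int (w i) * v i) ^ m i)))"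
    unfolding spec_nth
  proof (intro sum.cong refl)
    fix m assume "m \<in> MS k N"
    then have md: "mdeg k m = N" by (simp add: MS_def)
    show "fps_const (linsub k f w m) * (\<Prod>i<k. v i ^ m i) = fps_const (f $ N) *
      (of_nat (fact N div (\<Prod>i<k. fact (m i))) * (\<Prod>i<k. (of_int (w i) * v i) ^ m i))"
      unfolding linsub_def md
      by (simp add: fc_prod fps_of_nat fps_of_int power_mult_distrib prod.distrib ac_simps
            fps_const_mult[symmetric] fps_const_power[symmetric] del: fps_const_mult fps_const_power)
  qed
  also have "\<dots> = fps_const (f $ N) * (\<Sum>i<k. of_int (w i) * v i) ^ N"
    by (simp add: multinomial sum_distrib_left)
  finally show "spec k v (linsub k f w) $ N = Fac (\<Sum>i<k. of_int (w i) * v i) f $ N"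
    by (simp add: Fac_nth)
qed

lemma spec_mprodL: "spec k v (mprodL k as) = prod_list (map (spec k v) as)"
  by (induction as) (simp_all add: spec_mconst spec_mult)

lemma ffi: "fps_const (fps_const (of_int z) :: 'a::comm_ring_1 fps) = (of_int z :: 'a fps fps)"
  by (simp add: fps_of_int)

lemma genus_spec:
  fixes v :: "nat \<Rightarrow> 'a::comm_ring_1 fps" and f :: "'a fps"
  assumes "equiv_genus_eq k f pts c"
  defines "DD \<equiv> (\<lambda>q. prod_list (map (\<lambda>w. Fac (\<Sum>i<k. of_int (w i) * v i) f) (snd (pts ! q))))"
  shows "(\<Sum>j<length pts. of_int (fst (pts ! j)) * prod_list (map DD (filter (\<lambda>q. q \<noteq> j) [0..<length pts])))
         = fps_const (fps_const c) * prod_list (map DD [0..<length pts])"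
proof -
  have sd: "spec k v (fp_den k f pts q) = DD q" for q
    by (simp add: fp_den_def spec_mprodL DD_def o_def spec_linsub)
  have "spec k v (\<lambda>m. \<Sum>j<length pts. of_int (fst (pts ! j))
            * mprodL k (map (fp_den k f pts) (filter (\<lambda>q. q \<noteq> j) [0..<length pts])) m)
      = spec k v (\<lambda>m. c * mprodL k (map (fp_den k f pts) [0..<length pts]) m)"
    using assms(1) unfolding equiv_genus_eq_def by (intro spec_cong) auto
  moreover have "spec k v (\<lambda>m. of_int z * A m) = of_int z * spec k v A" for z A
    using spec_scal[of k v "of_int z" A] by (simp add: fps_of_int)
  ultimately show ?thesis
    by (simp add: spec_sum spec_scal spec_mprodL o_def sd ffi)
qed

definition lin :: "int \<Rightarrow> int \<Rightarrow> 'a::comm_ring_1 fps" where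
  "lin a b = fps_const (of_int a) + fps_const (of_int b) * fps_X"

lemma lin_sum: "(\<Sum>i\<in>A. of_int (w i) * lin (p i) (q i)) = (lin (\<Sum>i\<in>A. w i * p i) (\<Sum>i\<in>A. w i * q i) :: 'a::comm_ring_1 fps)"
proof -
  have "(\<Sum>i\<in>A. of_int (w i) * lin (p i) (q i)) = (\<Sum>i\<in>A. fps_const (of_int (w i * p i)) + fps_const (of_int (w i * q i)) * (fps_X :: 'a fps))"
    by (intro sum.cong refl) (simp add: lin_def fps_of_int[symmetric] algebra_simps del: fps_of_int)
  also have "\<dots> = fps_const (\<Sum>i\<in>A. of_int (w i * p i)) + fps_const (\<Sum>i\<in>A. of_int (w i * q i)) * fps_X"
    by (simp add: sum.distrib fc_sum sum_distrib_right del: fps_const_add fps_const_mult of_int_mult)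
  finally show ?thesis by (simp add: lin_def del: of_int_mult)
qed

lemma lin_pow_nth: "((lin a b :: 'a::comm_ring_1 fps) ^ N) $ j = of_nat (N choose j) * of_int a ^ (N - j) * of_int b ^ j"
proof -
  have "(lin a b :: 'a fps) ^ N = (fps_const (of_int b) * fps_X + fps_const (of_int a)) ^ N"
    by (simp add: lin_def add.commute)
  also have "\<dots> = (\<Sum>i\<le>N. of_nat (N choose i) * (fps_const (of_int b) * fps_X) ^ i * fps_const (of_int a) ^ (N - i))"
    by (rule binomial_ring)
  finally have e: "(lin a b :: 'a fps) ^ N = \<dots>" .
  show ?thesis
  proof (cases "j \<le> N")
    case True
    have "(\<Sum>i\<le>N. of_nat (N choose i) * (fps_const (of_int b) * fps_X) ^ i * fps_const (of_int a) ^ (N - i)) $ j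
        = (\<Sum>i\<le>N. if i = j then of_nat (N choose j) * (of_int b ^ j * of_int a ^ (N - j)) else (0::'a))"
      unfolding fps_sum_nth
      by (intro sum.cong refl) (simp add: power_mult_distrib fps_X_power_mult_right_nth fps_of_nat[symmetric] del: fps_of_nat)
    also have "\<dots> = of_nat (N choose j) * of_int a ^ (N - j) * of_int b ^ j"
      using True by (simp add: ac_simps)
    finally show ?thesis using e by simp
  next
    case False
    have "(\<Sum>i\<le>N. of_nat (N choose i) * (fps_const (of_int b) * fps_X) ^ i * fps_const (of_int a) ^ (N - i)) $ j
        = (\<Sum>i\<le>N. (0::'a))"
      unfolding fps_sum_nth using False
      by (intro sum.cong refl) (auto simp: power_mult_distrib fps_X_power_mult_right_nth fps_of_nat[symmetric] del: fps_of_nat)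
    then show ?thesis using e False by (simp add: binomial_eq_0)
  qed
qed

definition cS :: "nat \<Rightarrow> 'a::comm_ring_1 fps fps \<Rightarrow> 'a fps" where
  "cS j A = Abs_fps (\<lambda>N. A $ N $ j)"

lemma cS_nth: "cS j A $ N = A $ N $ j" by (simp add: cS_def)
lemma cS_add: "cS j (A + B) = cS j A + cS j B" by (simp add: cS_def fps_eq_iff)
lemma cS_diff: "cS j (A - B) = cS j A - cS j B" by (simp add: cS_def fps_eq_iff)
lemma cS_neg: "cS j (- A) = - cS j A" by (simp add: cS_def fps_eq_iff)
lemma cS_zero: "cS j 0 = 0" by (simp add: cS_def fps_eq_iff)
lemma cS_one0: "cS 0 1 = 1" by (simp add: cS_def fps_eq_iff)
lemma cS_oneS: "cS (Suc j) 1 = 0" by (simp add: cS_def fps_eq_iff)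
lemma cS_of_int: "cS j (of_int z * A) = of_int z * cS j A"
  by (simp add: cS_def fps_eq_iff fps_of_int[symmetric] del: fps_of_int)
lemma cS_const: "cS j (fps_const (fps_const c) * A) = fps_const c * cS j A"
  by (simp add: cS_def fps_eq_iff)
lemma cS_sum: "cS j (sum A I) = (\<Sum>i\<in>I. cS j (A i))"
  by (simp add: cS_def fps_eq_iff fps_sum_nth)

lemma cS_mult: "cS j (A * B) = (\<Sum>i\<le>j. cS i A * cS (j - i) B)"
proof (rule fps_ext)
  fix N
  have "cS j (A * B) $ N = (\<Sum>a=0..N. \<Sum>i=0..j. A $ a $ i * B $ (N - a) $ (j - i))"
    by (simp add: cS_nth fps_mult_nth fps_sum_nth)
  also have "\<dots> = (\<Sum>i=0..j. \<Sum>a=0..N. A $ a $ i * B $ (N - a) $ (j - i))"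
    by (rule sum.swap)
  also have "\<dots> = (\<Sum>i\<le>j. cS i A * cS (j - i) B) $ N"
    by (simp add: fps_sum_nth fps_mult_nth cS_nth atLeast0AtMost)
  finally show "cS j (A * B) $ N = (\<Sum>i\<le>j. cS i A * cS (j - i) B) $ N" .
qed

lemma cS0_mult: "cS 0 (A * B) = cS 0 A * cS 0 B" by (simp add: cS_mult)
lemma cS1_mult: "cS 1 (A * B) = cS 0 A * cS 1 B + cS 1 A * cS 0 B"
  by (simp add: cS_mult numeral_eq_Suc atMost_Suc)
lemma cS2_mult: "cS 2 (A * B) = cS 0 A * cS 2 B + cS 1 A * cS 1 B + cS 2 A * cS 0 B"
  by (simp add: cS_mult numeral_eq_Suc atMost_Suc)

definition sc :: "int \<Rightarrow> 'a::comm_ring_1 fps \<Rightarrow> 'a fps" where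
  "sc k a = Abs_fps (\<lambda>N. of_int k ^ N * a $ N)"

lemma cS_Fac: "cS j (Fac (lin a b) f) = Abs_fps (\<lambda>N. f $ N * (of_nat (N choose j) * of_int a ^ (N - j) * of_int b ^ j))"
  by (simp add: cS_def Fac_nth lin_pow_nth)

lemma cS0_Fac: "cS 0 (Fac (lin a b) f) = sc a f"
  by (simp add: cS_Fac sc_def fps_eq_iff mult.commute)

lemma Fac_mult: "Fac L (a * b) = Fac L a * Fac L b"
proof (rule fps_ext)
  fix N
  have "Fac L (a * b) $ N = (\<Sum>i=0..N. fps_const (a $ i) * L ^ i * (fps_const (b $ (N - i)) * L ^ (N - i)))"
    unfolding Fac_nth fps_mult_nth fc_sum sum_distrib_right
  proof (intro sum.cong refl)
    fix x assume "x \<in> {0..N}"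
    then have "L ^ N = L ^ x * L ^ (N - x)" by (simp flip: power_add)
    then show "fps_const (a $ x * b $ (N - x)) * L ^ N = fps_const (a $ x) * L ^ x * (fps_const (b $ (N - x)) * L ^ (N - x))"
      by (simp add: ac_simps)
  qed
  then show "Fac L (a * b) $ N = (Fac L a * Fac L b) $ N" by (simp add: fps_mult_nth Fac_nth)
qed

lemma Fac_one: "Fac L 1 = 1"
  by (simp add: fps_eq_iff Fac_nth)

lemma Fac_const: "Fac L (fps_const c) = fps_const (fps_const c)"
  by (rule fps_ext) (simp add: Fac_nth)

lemma Fac_X: "Fac L fps_X = fps_const L * fps_X"
  by (rule fps_ext) (simp add: Fac_nth fps_X_def)

lemma Fac_add: "Fac L (a + b) = Fac L a + Fac L b"
  by (rule fps_ext) (simp add: Fac_nth algebra_simps fps_const_add[symmetric] del: fps_const_add)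

lemma Fac_lin0: "Fac (lin a 0) f = Abs_fps (\<lambda>N. fps_const (sc a f $ N))"
  by (rule fps_ext) (simp add: Fac_nth lin_def sc_def mult.commute)

lemma natinv_uniq:
  assumes "of_nat n * (y::'a::comm_ring_1) = 1"
  shows "nat_inv n = y"
proof -
  have u: "z = y" if "of_nat n * z = 1" for z :: 'a
  proof -
    have "z = z * (of_nat n * y)" using assms by simp
    also have "\<dots> = (of_nat n * z) * y" by (simp add: ac_simps)
    finally show ?thesis using that by simp
  qed
  show ?thesis unfolding nat_inv_def using assms u by (rule the_equality)
qed

lemma natinv:
  assumes "Q_algebra TYPE('a::comm_ring_1)" "n > 0"
  shows "of_nat n * (nat_inv n :: 'a) = 1"
proof -
  obtain y :: 'a where "of_nat n * y = 1" using assms unfolding Q_algebra_def by blast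
  then show ?thesis using natinv_uniq by metis
qed

lemma natinv_mult:
  assumes "Q_algebra TYPE('a::comm_ring_1)" "a > 0" "b > 0"
  shows "(nat_inv a :: 'a) * nat_inv b = nat_inv (a * b)"
proof -
  have "of_nat (a * b) * ((nat_inv a :: 'a) * nat_inv b) = (of_nat a * nat_inv a) * (of_nat b * nat_inv b)"
    by (simp add: ac_simps)
  also have "\<dots> = 1" using natinv[OF assms(1,2)] natinv[OF assms(1,3)] by simp
  finally show ?thesis using natinv_uniq by metis
qed

lemma natinv_fact_binom:
  assumes "Q_algebra TYPE('a::comm_ring_1)" "i \<le> N"
  shows "(nat_inv (fact i) :: 'a) * nat_inv (fact (N - i)) = of_nat (N choose i) * nat_inv (fact N)"
proof -
  have e: "fact N = fact i * fact (N - i) * (N choose i)" using binomial_fact_lemma[OF assms(2)] by simp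
  have "of_nat (fact i * fact (N - i)) * (of_nat (N choose i) * (nat_inv (fact N) :: 'a)) = of_nat (fact N) * nat_inv (fact N)"
    by (simp add: e ac_simps)
  also have "\<dots> = 1" by (rule natinv[OF assms(1)]) simp
  finally have "nat_inv (fact i * fact (N - i)) = (of_nat (N choose i) * (nat_inv (fact N) :: 'a))"
    using natinv_uniq by metis
  then show ?thesis using natinv_mult[OF assms(1), of "fact i" "fact (N - i)"] by simp
qed

lemma rexp_nth: "rexp a $ N = a ^ N * nat_inv (fact N)"
  by (simp add: rexp_def)

lemma rexp_add:
  assumes "Q_algebra TYPE('a::comm_ring_1)"
  shows "rexp (a::'a) * rexp b = rexp (a + b)"
proof (rule fps_ext)
  fix N
  have "(rexp a * rexp b) $ N = (\<Sum>i=0..N. a ^ i * b ^ (N - i) * ((nat_inv (fact i) :: 'a) * nat_inv (fact (N - i))))"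
    by (simp add: fps_mult_nth rexp_nth ac_simps)
  also have "\<dots> = (\<Sum>i\<le>N. of_nat (N choose i) * a ^ i * b ^ (N - i)) * nat_inv (fact N)"
    unfolding sum_distrib_right atLeast0AtMost
    by (intro sum.cong refl) (simp add: natinv_fact_binom[OF assms] ac_simps)
  also have "\<dots> = rexp (a + b) $ N" by (simp only: rexp_nth binomial_ring)
  finally show "(rexp a * rexp b) $ N = rexp (a + b) $ N" .
qed

lemma rexp_zero:
  assumes "Q_algebra TYPE('a::comm_ring_1)"
  shows "rexp (0::'a) = 1"
proof (rule fps_ext)
  fix N show "rexp (0::'a) $ N = 1 $ N"
    using natinv[OF assms, of 1] by (cases N) (simp_all add: rexp_nth)
qed

lemma rexp_inv:
  assumes "Q_algebra TYPE('a::comm_ring_1)"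
  shows "rexp (a::'a) * rexp (- a) = 1"
  using rexp_add[OF assms, of a "-a"] rexp_zero[OF assms] by simp

lemma rexp_deriv:
  assumes "Q_algebra TYPE('a::comm_ring_1)"
  shows "fps_deriv (rexp (a::'a)) = fps_const a * rexp a"
proof (rule fps_ext)
  fix N
  have "(nat_inv (fact (Suc N)) :: 'a) * of_nat (Suc N) = nat_inv (fact N)"
  proof -
    have ff: "(of_nat (fact (Suc N)) :: 'a) = of_nat (Suc N) * of_nat (fact N)"
      by (metis fact_Suc of_nat_mult of_nat_id)
    have "of_nat (fact N) * ((nat_inv (fact (Suc N)) :: 'a) * of_nat (Suc N)) = of_nat (fact (Suc N)) * nat_inv (fact (Suc N))"
      by (simp only: ff ac_simps)
    also have "\<dots> = 1" by (rule natinv[OF assms]) simp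
    finally show ?thesis using natinv_uniq by metis
  qed
  then show "fps_deriv (rexp a) $ N = (fps_const a * rexp a) $ N"
    by (simp add: rexp_nth ac_simps)
qed

lemma rexp_0: "Q_algebra TYPE('a::comm_ring_1) \<Longrightarrow> rexp (a::'a) $ 0 = 1"
  using natinv[of 1] by (simp add: rexp_nth)

lemma Q_fps: "Q_algebra TYPE('a::comm_ring_1) \<Longrightarrow> Q_algebra TYPE('a fps)"
  unfolding Q_algebra_def
  by (metis fps_const_mult fps_const_1_eq_1 fps_of_nat)

lemma natinv_fps:
  assumes "Q_algebra TYPE('a::comm_ring_1)" "n > 0"
  shows "(nat_inv n :: 'a fps) = fps_const (nat_inv n)"
  by (rule natinv_uniq) (simp add: fps_of_nat[symmetric] natinv[OF assms] del: fps_of_nat)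

lemma Fac_rexp:
  assumes "Q_algebra TYPE('a::comm_ring_1)"
  shows "Fac L (rexp (a::'a)) = rexp (fps_const a * L)"
  by (rule fps_ext) (simp add: Fac_nth rexp_nth natinv_fps[OF assms] power_mult_distrib ac_simps)

lemma sc_mult: "sc k (a * b) = sc k a * sc k b"
proof (rule fps_ext)
  fix N
  show "sc k (a * b) $ N = (sc k a * sc k b) $ N"
    unfolding sc_def fps_mult_nth by (simp add: sum_distrib_left ac_simps power_add[symmetric])
qed

lemma sc_add: "sc k (a + b) = sc k a + sc k b" by (simp add: sc_def fps_eq_iff algebra_simps)
lemma sc_diff: "sc k (a - b) = sc k a - sc k b" by (simp add: sc_def fps_eq_iff algebra_simps)
lemma sc_neg: "sc k (- a) = - sc k a" by (simp add: sc_def fps_eq_iff algebra_simps)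
lemma sc_const: "sc k (fps_const c) = fps_const c" by (simp add: sc_def fps_eq_iff)
lemma sc_one: "sc k 1 = 1" by (simp add: sc_def fps_eq_iff)
lemma sc_X: "sc k fps_X = fps_const (of_int k) * fps_X"
proof (rule fps_ext)
  fix n show "sc k fps_X $ n = (fps_const (of_int k) * fps_X) $ n"
    by (cases "n = 1") (simp_all add: sc_def fps_X_def)
qed
lemma sc_1: "sc 1 a = a" by (simp add: sc_def fps_eq_iff)
lemma sc_rexp: "sc k (rexp a) = rexp (of_int k * a)"
  by (simp add: sc_def fps_eq_iff rexp_nth power_mult_distrib)
lemma sc_power: "sc k (a ^ n) = sc k a ^ n"
  by (induction n) (simp_all add: sc_one sc_mult)
lemma sc_sc: "sc k (sc l a) = sc (k * l) a"
  by (simp add: sc_def fps_eq_iff power_mult_distrib)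
lemma sc_deriv: "fps_deriv (sc k a) = fps_const (of_int k) * sc k (fps_deriv a)"
  by (simp add: sc_def fps_eq_iff ac_simps)

definition v6 :: "nat \<Rightarrow> 'a::comm_ring_1 fps" where
  "v6 i = lin (if i = 0 then 1 else 0) (if i = 1 then 1 else 0)"

lemma S6_lin: "(\<Sum>i<2. of_int (wv [a, b] i) * v6 i) = (lin a b :: 'a::comm_ring_1 fps)"
  unfolding v6_def lin_sum by (simp add: wv_def numeral_2_eq_2)

lemma S6_eq:
  fixes f :: "'a::comm_ring_1 fps"
  assumes "equiv_genus_eq 2 f S6_data 0"
  shows "Fac (lin (-1) 0) f * (Fac (lin 0 (-1)) f * Fac (lin 1 1) f)
       + Fac (lin 1 0) f * (Fac (lin 0 1) f * Fac (lin (-1) (-1)) f) = 0"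
  using genus_spec[OF assms, of v6]
  by (simp add: S6_data_def S6_lin del: lessThan_Suc)

lemma cS_Fac_free: "cS (Suc j) (Fac (lin a 0) f) = 0"
  by (simp add: cS_Fac fps_eq_iff)

lemma cS_Fac_0b: "cS j (Fac (lin 0 b) f) = fps_const (of_int b ^ j * f $ j) * fps_X ^ j"
proof (rule fps_ext)
  fix N show "cS j (Fac (lin 0 b) f) $ N = (fps_const (of_int b ^ j * f $ j) * fps_X ^ j) $ N"
    by (cases "N < j") (auto simp: cS_Fac fps_X_power_mult_right_nth binomial_eq_0 power_0_left)
qed

definition D1 :: "int \<Rightarrow> 'a::comm_ring_1 fps \<Rightarrow> 'a fps" where
  "D1 k f = Abs_fps (\<lambda>N. of_nat N * of_int k ^ (N - 1) * f $ N)"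

lemma cS1_Fac: "cS 1 (Fac (lin a b) f) = fps_const (of_int b) * D1 a f"
  by (simp add: cS_Fac D1_def fps_eq_iff ac_simps)

lemma cS1_Fac': "cS (Suc 0) (Fac (lin a b) f) = fps_const (of_int b) * D1 a f"
  using cS1_Fac by simp

lemma D1_lemma: "fps_X * fps_deriv (sc k f) = fps_const (of_int k) * D1 k f"
proof (rule fps_ext)
  fix N show "(fps_X * fps_deriv (sc k f)) $ N = (fps_const (of_int k) * D1 k f) $ N"
    by (cases N) (simp_all add: fps_X_mult_nth sc_def D1_def ac_simps)
qed

lemma X2_cancel: "fps_X ^ 2 * A = 0 \<Longrightarrow> A = 0"
proof (rule fps_ext)
  fix n assume "fps_X ^ 2 * A = 0"
  then have "(fps_X ^ 2 * A) $ (n + 2) = 0" by simp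
  then show "A $ n = 0 $ n" by (simp add: fps_X_power_mult_nth)
qed

lemma S6_ode:
  fixes f :: "'a::comm_ring_1 fps"
  assumes f0: "f $ 0 = 0" and f1: "f $ 1 = 1" and eq: "equiv_genus_eq 2 f S6_data 0"
  shows "f * fps_deriv (sc (-1) f) - sc (-1) f * fps_deriv f + fps_const (2 * f $ 2) * f * sc (-1) f = 0"
proof -
  let ?h = "sc (-1) f"
  have f1': "f $ Suc 0 = 1" using f1 by simp
  have "cS 2 (Fac (lin (-1) 0) f * (Fac (lin 0 (-1)) f * Fac (lin 1 1) f)
       + Fac (lin 1 0) f * (Fac (lin 0 1) f * Fac (lin (-1) (-1)) f)) = 0"
    using S6_eq[OF eq] by (simp add: cS_zero)
  then have "?h * (fps_const (- 1) * fps_X * D1 1 f + fps_const (f $ 2) * fps_X ^ 2 * f)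
        + f * (fps_X * (fps_const (- 1) * D1 (-1) f) + fps_const (f $ 2) * fps_X ^ 2 * ?h) = 0"
    by (simp add: cS_add cS2_mult cS1_mult cS0_mult cS_Fac_free cS0_Fac cS_Fac_0b cS1_Fac cS1_Fac' f0 f1 f1' sc_1
          del: fps_const_neg)
  moreover have d1: "D1 1 f = fps_X * fps_deriv f" using D1_lemma[of 1 f] by (simp add: sc_1)
  moreover have m1: "fps_const (-1::'a) = -1" by (metis fps_const_neg fps_const_1_eq_1)
  moreover have d2: "D1 (-1) f = - (fps_X * fps_deriv ?h)" using D1_lemma[of "-1" f] m1 by simp
  moreover have "fps_const (2 * f $ 2) = 2 * fps_const (f $ 2)"
    by (metis fps_const_mult fps_numeral_fps_const numeral_One one_add_one numeral_plus_one)
  ultimately have "fps_X ^ 2 * (f * fps_deriv ?h - ?h * fps_deriv f + fps_const (2 * f $ 2) * f * ?h) = 0"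
    by (simp add: algebra_simps power2_eq_square)
  then show ?thesis by (rule X2_cancel)
qed

lemma natinv_cancel:
  assumes "Q_algebra TYPE('a::comm_ring_1)" "n > 0" "of_nat n * (x::'a) = 0"
  shows "x = 0"
proof -
  have "x = (nat_inv n * of_nat n) * x" using natinv[OF assms(1,2)] by (simp add: mult.commute)
  also have "\<dots> = 0" using assms(3) by (simp add: mult.assoc)
  finally show ?thesis .
qed

lemma ode_unique:
  fixes g k :: "'a::comm_ring_1 fps"
  assumes Q: "Q_algebra TYPE('a)" and g0: "g $ 0 = 0" and g1: "g $ 1 = 1"
    and eq: "g * fps_deriv k = k * fps_deriv g" and k0: "k $ 0 = 0" and k1: "k $ 1 = 0"
  shows "k = 0"
proof -
  have "k $ n = 0" for n
  proof (induction n rule: less_induct)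
    case (less n)
    show ?case
    proof (cases "n \<le> 1")
      case True
      then show ?thesis using k0 k1 by (cases n) auto
    next
      case False
      define m where "m = n - 2"
      have m: "n = Suc (Suc m)" using False unfolding m_def by arith
      have A: "(g * fps_deriv k) $ n = of_nat n * k $ n"
      proof -
        have "(g * fps_deriv k) $ n = (\<Sum>i=0..n. g $ i * (of_nat (n - i + 1) * k $ (n - i + 1)))"
          by (simp add: fps_mult_nth)
        also have "\<dots> = g $ 0 * (of_nat (n + 1) * k $ (n + 1)) + (g $ 1 * (of_nat n * k $ n)
             + (\<Sum>i=2..n. g $ i * (of_nat (n - i + 1) * k $ (n - i + 1))))"
          using m by (simp add: sum.atLeast_Suc_atMost numeral_2_eq_2)
        also have "(\<Sum>i=2..n. g $ i * (of_nat (n - i + 1) * k $ (n - i + 1))) = 0"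
          using less m by (intro sum.neutral) auto
        finally show ?thesis using g0 g1 by simp
      qed
      have B: "(k * fps_deriv g) $ n = k $ n"
      proof -
        have "(k * fps_deriv g) $ n = (\<Sum>i=0..Suc (Suc m). k $ i * (of_nat (n - i + 1) * g $ (n - i + 1)))"
          using m by (simp add: fps_mult_nth)
        also have "\<dots> = (\<Sum>i=0..Suc m. k $ i * (of_nat (n - i + 1) * g $ (n - i + 1))) + k $ n * g $ 1"
          using m by (simp add: sum.atLeast0_atMost_Suc)
        also have "(\<Sum>i=0..Suc m. k $ i * (of_nat (n - i + 1) * g $ (n - i + 1))) = 0"
          using less m by (intro sum.neutral) auto
        finally show ?thesis using g1 by simp
      qed
      have "of_nat n * k $ n = k $ n" using A B eq by simp
      then have "of_nat (Suc m) * k $ n = 0" using m by (simp add: algebra_simps)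
      then show ?thesis using natinv_cancel[OF Q, of "Suc m" "k $ n"] by simp
    qed
  qed
  then show ?thesis by (simp add: fps_eq_iff)
qed

lemma odd_g:
  fixes f :: "'a::comm_ring_1 fps"
  assumes Q: "Q_algebra TYPE('a)" and f0: "f $ 0 = 0" and f1: "f $ 1 = 1"
    and eq: "equiv_genus_eq 2 f S6_data 0"
  shows "sc (-1) (rexp (- (f $ 2)) * f) = - (rexp (- (f $ 2)) * f)"
proof -
  define \<alpha> where "\<alpha> = f $ 2"
  define Ep where "Ep = rexp \<alpha>"
  define Em where "Em = rexp (- \<alpha>)"
  define g where "g = Em * f"
  define h where "h = sc (-1) f"
  define hg where "hg = sc (-1) g"
  have EE: "Ep * Em = 1" unfolding Ep_def Em_def by (rule rexp_inv[OF Q])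
  have fg: "f = Ep * g" unfolding g_def using EE by (simp add: mult.assoc[symmetric])
  have hh: "h = Em * hg" unfolding h_def hg_def fg Ep_def Em_def by (simp add: sc_mult sc_rexp)
  have dEp: "fps_deriv Ep = fps_const \<alpha> * Ep" unfolding Ep_def by (rule rexp_deriv[OF Q])
  have dEm: "fps_deriv Em = - fps_const \<alpha> * Em" unfolding Em_def using rexp_deriv[OF Q, of "-\<alpha>"] by simp
  have ode: "f * fps_deriv h - h * fps_deriv f + fps_const (2 * \<alpha>) * f * h = 0"
    using S6_ode[OF f0 f1 eq] unfolding h_def \<alpha>_def .
  have c2: "fps_const (2 * \<alpha>) = 2 * fps_const \<alpha>"
    by (metis fps_const_mult fps_numeral_fps_const numeral_One one_add_one numeral_plus_one)
  have "f * fps_deriv h - h * fps_deriv f + fps_const (2 * \<alpha>) * f * h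
      = (Ep * Em) * (g * fps_deriv hg - hg * fps_deriv g)"
    unfolding fg hh c2 by (simp add: fps_deriv_mult dEp dEm algebra_simps del: fps_const_neg)
  then have "g * fps_deriv hg - hg * fps_deriv g = 0" using ode EE by (simp only: mult_1)
  then have ode2: "g * fps_deriv hg = hg * fps_deriv g" by simp
  have g0: "g $ 0 = 0" unfolding g_def using f0 by simp
  have g1: "g $ 1 = 1" unfolding g_def Em_def using f0 f1 rexp_0[OF Q] by (simp add: fps_mult_nth numeral_2_eq_2)
  have "hg + g = 0"
  proof (rule ode_unique[OF Q g0 g1])
    show "g * fps_deriv (hg + g) = (hg + g) * fps_deriv g" using ode2 by (simp add: algebra_simps)
    show "(hg + g) $ 0 = 0" using g0 by (simp add: hg_def sc_def)
    show "(hg + g) $ 1 = 0" using g1 by (simp add: hg_def sc_def)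
  qed
  then show ?thesis unfolding hg_def g_def Em_def \<alpha>_def by (simp add: eq_neg_iff_add_eq_0)
qed

definition ivi :: "int \<Rightarrow> 'a::comm_ring_1" where
  "ivi k = (if k = 0 then 0 else if k > 0 then nat_inv (nat k) else - nat_inv (nat (- k)))"

lemma ivi:
  assumes Q: "Q_algebra TYPE('a::comm_ring_1)" and k: "k \<noteq> 0"
  shows "of_int k * (ivi k :: 'a) = 1"
proof (cases "k > 0")
  case True
  then have "of_int k = (of_nat (nat k) :: 'a)" by simp
  then show ?thesis using True k natinv[OF Q, of "nat k"] by (simp add: ivi_def)
next
  case False
  then have "of_int k = - (of_nat (nat (- k)) :: 'a)" by simp
  then show ?thesis using False k natinv[OF Q, of "nat (-k)"] by (simp add: ivi_def)
qed

lemma ivi_1: "Q_algebra TYPE('a::comm_ring_1) \<Longrightarrow> (ivi 1 :: 'a) = 1"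
  using ivi[of 1] by simp

lemma ivi_neg: "(ivi (- k) :: 'a::comm_ring_1) = - ivi k"
  by (simp add: ivi_def)

definition Linv :: "int \<Rightarrow> int \<Rightarrow> 'a::comm_ring_1 fps" where
  "Linv k m = Abs_fps (\<lambda>j. (- of_int m) ^ j * ivi k ^ (j + 1))"

lemma lin_Linv:
  assumes Q: "Q_algebra TYPE('a::comm_ring_1)" and k: "k \<noteq> 0"
  shows "lin k m * (Linv k m :: 'a fps) = 1"
proof (rule fps_ext)
  fix n
  have kk: "of_int k * (ivi k :: 'a) = 1" by (rule ivi[OF Q k])
  show "(lin k m * Linv k m) $ n = (1 :: 'a fps) $ n"
  proof (cases n)
    case 0 then show ?thesis using kk by (simp add: lin_def Linv_def)
  next
    case (Suc j)
    have "(lin k m * (Linv k m :: 'a fps)) $ Suc j = of_int k * ((- of_int m) ^ Suc j * ivi k ^ (Suc j + 1))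
         + of_int m * ((- of_int m) ^ j * ivi k ^ (j + 1))"
      by (simp add: lin_def Linv_def algebra_simps fps_of_int[symmetric] del: fps_of_int)
    also have "\<dots> = (- of_int m) ^ Suc j * ivi k ^ Suc j * (of_int k * ivi k) + of_int m * ((- of_int m) ^ j * ivi k ^ (j + 1))"
      by (simp add: algebra_simps)
    also have "\<dots> = 0" using kk by (simp add: algebra_simps)
    finally show ?thesis using Suc by simp
  qed
qed

definition Yb :: "'a::comm_ring_1 fps \<Rightarrow> int \<Rightarrow> int \<Rightarrow> 'a fps fps" where
  "Yb P k m = Abs_fps (\<lambda>N. fps_const (P $ N) * (if N = 0 then Linv k m else lin k m ^ (N - 1)))"

definition ys :: "'a::comm_ring_1 fps \<Rightarrow> int \<Rightarrow> 'a fps fps" where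
  "ys P m = fps_const (fps_const (ivi m)) * Fac (lin 0 m) P"

definition uu :: "'a::comm_ring_1 fps \<Rightarrow> int \<times> int \<Rightarrow> 'a fps fps" where
  "uu gt km = (case km of (k, m) \<Rightarrow> if k = 0 then fps_const (fps_const (of_int m)) * Fac (lin 0 m) gt
      else fps_const (lin k m) * Fac (lin k m) gt)"

definition yy :: "'a::comm_ring_1 fps \<Rightarrow> int \<times> int \<Rightarrow> 'a fps fps" where
  "yy P km = (case km of (k, m) \<Rightarrow> if k = 0 then ys P m else Yb P k m)"

lemma constL_Yb:
  assumes Q: "Q_algebra TYPE('a::comm_ring_1)" and k: "k \<noteq> 0"
  shows "fps_const (lin k m) * Yb P k m = Fac (lin k m) (P :: 'a fps)"
proof (rule fps_ext)
  fix N show "(fps_const (lin k m) * Yb P k m) $ N = Fac (lin k m) P $ N"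
  proof (cases N)
    case 0
    have "(fps_const (lin k m) * Yb P k m) $ 0 = lin k m * (fps_const (P $ 0) * Linv k m)" by (simp add: Yb_def)
    also have "\<dots> = fps_const (P $ 0) * (lin k m * Linv k m)" by (simp only: ac_simps)
    also have "\<dots> = Fac (lin k m) P $ 0" using lin_Linv[OF Q k, of m] by (simp add: Fac_nth)
    finally show ?thesis using 0 by simp
  next
    case (Suc n) then show ?thesis by (simp add: Yb_def Fac_nth ac_simps)
  qed
qed

lemma uu_yy:
  assumes Q: "Q_algebra TYPE('a::comm_ring_1)" and inv: "gt * P = (1 :: 'a fps)"
    and nz: "fst km \<noteq> 0 \<or> snd km \<noteq> 0"
  shows "uu gt km * yy P km = 1"
proof -
  obtain k m where km: "km = (k, m)" by (cases km)
  show ?thesis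
  proof (cases "k = 0")
    case True
    then have m: "m \<noteq> 0" using nz km by simp
    have e1: "(fps_const (fps_const (of_int m)) :: 'a fps fps) * fps_const (fps_const (ivi m)) = 1"
      using ivi[OF Q m] by simp
    have "uu gt km * yy P km = fps_const (fps_const (of_int m)) * Fac (lin 0 m) gt * (fps_const (fps_const (ivi m)) * Fac (lin 0 m) P)"
      using True km by (simp add: uu_def yy_def ys_def)
    also have "\<dots> = (fps_const (fps_const (of_int m)) * fps_const (fps_const (ivi m))) * (Fac (lin 0 m) gt * Fac (lin 0 m) P)"
      by (simp only: ac_simps)
    also have "\<dots> = 1" unfolding e1 by (simp add: Fac_mult[symmetric] inv Fac_one)
    finally show ?thesis .
  next
    case False
    have "uu gt km * yy P km = Fac (lin k m) gt * (fps_const (lin k m) * Yb P k m)"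
      using False km by (simp add: uu_def yy_def ac_simps)
    also have "\<dots> = 1" by (simp add: constL_Yb[OF Q False] Fac_mult[symmetric] inv Fac_one)
    finally show ?thesis .
  qed
qed

definition c2 :: "nat \<Rightarrow> nat" where
  "c2 N = (if N = 0 then 1 else (N - 1) choose 2)"

definition Q2 :: "'a::comm_ring_1 fps \<Rightarrow> 'a fps" where
  "Q2 P = Abs_fps (\<lambda>N. of_nat (c2 N) * P $ N)"

lemma cS0_Yb:
  assumes Q: "Q_algebra TYPE('a::comm_ring_1)" and k: "k \<noteq> 0"
  shows "cS 0 (Yb P k m) = fps_const (ivi k) * sc k (P :: 'a fps)"
proof (rule fps_ext)
  fix N
  have kk: "of_int k * (ivi k :: 'a) = 1" by (rule ivi[OF Q k])
  show "cS 0 (Yb P k m) $ N = (fps_const (ivi k) * sc k P) $ N"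
  proof (cases N)
    case 0 then show ?thesis by (simp add: cS_nth Yb_def Linv_def sc_def)
  next
    case (Suc n)
    have kk': "(of_int k :: 'a) * (ivi k * x) = x" for x using kk by (metis mult.assoc mult.left_neutral)
    show ?thesis using Suc by (simp add: cS_nth Yb_def sc_def lin_pow_nth ac_simps kk')
  qed
qed

lemma cS2_Yb:
  assumes Q: "Q_algebra TYPE('a::comm_ring_1)" and k: "k \<noteq> 0"
  shows "cS 2 (Yb P k m) = fps_const (of_int m ^ 2 * ivi k ^ 3) * sc k (Q2 (P :: 'a fps))"
proof (rule fps_ext)
  fix N
  have kk: "of_int k * (ivi k :: 'a) = 1" by (rule ivi[OF Q k])
  show "cS 2 (Yb P k m) $ N = (fps_const (of_int m ^ 2 * ivi k ^ 3) * sc k (Q2 P)) $ N"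
  proof (cases "N \<ge> 3")
    case True
    define n where "n = N - 3"
    have n: "N = Suc (Suc (Suc n))" using True unfolding n_def by arith
    have A: "cS 2 (Yb P k m) $ N = P $ N * (of_nat ((N - 1) choose 2) * of_int k ^ n * of_int m ^ 2)"
    proof -
      have "cS 2 (Yb P k m) $ N = P $ N * ((lin k m ^ (N - 1)) $ 2)" using True by (simp add: cS_nth Yb_def)
      also have "\<dots> = P $ N * (of_nat ((N - 1) choose 2) * of_int k ^ (N - 1 - 2) * of_int m ^ 2)"
        by (simp only: lin_pow_nth)
      also have "N - 1 - 2 = n" using n by simp
      finally show ?thesis .
    qed
    have B: "(fps_const (of_int m ^ 2 * ivi k ^ 3) * sc k (Q2 P)) $ N
        = of_int m ^ 2 * (ivi k ^ 3 * of_int k ^ N) * (of_nat (c2 N) * P $ N)"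
      by (simp add: sc_def Q2_def ac_simps)
    have "(ivi k :: 'a) ^ 3 * of_int k ^ N = (of_int k * ivi k) ^ 3 * of_int k ^ n"
      using n by (simp add: algebra_simps power3_eq_cube)
    then have C: "(ivi k :: 'a) ^ 3 * of_int k ^ N = of_int k ^ n" using kk by simp
    have D: "c2 N = (N - 1) choose 2" using True by (simp add: c2_def)
    show ?thesis unfolding A B C D by (simp add: ac_simps)
  next
    case False
    then have "N = 0 \<or> N = 1 \<or> N = 2" by auto
    then show ?thesis
      by (auto simp: cS_nth Yb_def sc_def Q2_def c2_def lin_pow_nth Linv_def ac_simps numeral_2_eq_2 power2_eq_square power3_eq_cube)
  qed
qed

lemma cS_Yb_free: "cS (Suc j) (Yb P k 0) = 0"
  by (rule fps_ext) (simp add: cS_nth Yb_def Linv_def lin_pow_nth)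

lemma cS_ys: "cS j (ys P m) = fps_const (ivi m) * (fps_const (of_int m ^ j * P $ j) * fps_X ^ j)"
  by (simp only: ys_def cS_const cS_Fac_0b)

lemma cS_free_mult:
  assumes "\<And>j. cS (Suc j) A = 0"
  shows "cS n (A * B) = cS 0 A * cS n B"
proof -
  have "cS n (A * B) = (\<Sum>i\<le>n. cS i A * cS (n - i) B)" by (rule cS_mult)
  also have "\<dots> = (\<Sum>i\<in>{0}. cS i A * cS (n - i) B)"
    using assms by (intro sum.mono_neutral_right) (auto, metis not0_implies_Suc mult_zero_left)
  finally show ?thesis by simp
qed

definition Xi :: "'a::comm_ring_1 fps \<Rightarrow> 'a fps" where
  "Xi P = P ^ 3 - fps_const (3 * P $ 2) * fps_X ^ 2 * P - Q2 P"

definition Fib :: "'a::comm_ring_1 fps \<Rightarrow> int \<Rightarrow> 'a fps" where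
  "Fib P c = cS 2 (Yb P c 0 * (ys P 1 * ys P 1)) - cS 2 (Yb P c (-1) * (ys P 2 * ys P 1))
     + cS 2 (Yb P c 1 * (ys P 2 * ys P (-1))) - cS 0 (Yb P c 1 * (Yb P (-c) 1 * Yb P c 0))"

lemma cS1_Yb_free: "cS 1 (Yb P k 0) = 0" using cS_Yb_free[of 0] by simp
lemma cS2_Yb_free: "cS 2 (Yb P k 0) = 0" using cS_Yb_free[of 1] by (simp add: numeral_2_eq_2)

lemma cS1_mult': "cS (Suc 0) (A * B) = cS 0 A * cS (Suc 0) B + cS (Suc 0) A * cS 0 B"
  using cS1_mult by simp

lemma sc_even: "sc (-1) P = P \<Longrightarrow> sc (- k) P = sc k P"
  by (metis mult_minus1 sc_sc mult.commute)

lemma fib_alg: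
  fixes A a p C Pc Q X :: "'b::comm_ring_1"
  assumes r1: "C * A = 1" and r2: "2 * a = 1"
  shows "A * Pc * (2 * (X^2 * p)) + (A * Pc * (- (a * (p * X^2)) - a * (4 * p * X^2)) - A * Pc * (a * (p * X^2) + a * (4 * p * X^2))) - 2 * (Q * (a * A ^ 3)) + A * Pc * (A * Pc * (A * Pc))
       = A ^ 3 * (Pc ^ 3 - 3 * p * (C * X)^2 * Pc - Q)"
proof -
  have "A * Pc * (2 * (X^2 * p)) + (A * Pc * (- (a * (p * X^2)) - a * (4 * p * X^2)) - A * Pc * (a * (p * X^2) + a * (4 * p * X^2))) - 2 * (Q * (a * A ^ 3)) + A * Pc * (A * Pc * (A * Pc))
     = 2 * (A * Pc * p * X^2) - (2 * a) * (5 * (A * Pc * p * X^2)) - (2 * a) * (Q * A^3) + A^3 * Pc^3"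
    by (simp add: algebra_simps power3_eq_cube)
  also have "\<dots> = 2 * (A * Pc * p * X^2) - 5 * (A * Pc * p * X^2) - Q * A^3 + A^3 * Pc^3"
    by (simp add: r2)
  also have "\<dots> = A^3 * Pc^3 - 3 * (A * Pc * p * X^2) - A^3 * Q" by (simp add: algebra_simps)
  also have "A * Pc * p * X^2 = (C * A)^2 * A * Pc * p * X^2" by (simp add: r1)
  also have "A^3 * Pc^3 - 3 * ((C * A)^2 * A * Pc * p * X^2) - A^3 * Q = A ^ 3 * (Pc ^ 3 - 3 * p * (C * X)^2 * Pc - Q)"
    by (simp add: algebra_simps power2_eq_square power3_eq_cube)
  finally show ?thesis .
qed

lemma Fib_eq:
  fixes P :: "'a::comm_ring_1 fps"
  assumes Q: "Q_algebra TYPE('a)" and c: "c \<noteq> 0" and P0: "P $ 0 = 1" and P1: "P $ 1 = 0"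
    and ev: "sc (-1) P = P"
  shows "Fib P c = fps_const (ivi c ^ 3) * sc c (Xi P)"
proof -
  have i1: "(ivi 1 :: 'a) = 1" by (rule ivi_1[OF Q])
  have im1: "(ivi (-1) :: 'a) = -1" by (simp only: ivi_neg i1)
  have c': "- c \<noteq> 0" using c by simp
  have P1': "P $ Suc 0 = 0" using P1 by simp
  have r1: "fps_const (of_int c) * fps_const (ivi c) = (1::'a fps)" using ivi[OF Q c] by simp
  have r2: "2 * fps_const (ivi 2) = (1::'a fps)"
    using ivi[OF Q, of 2] by (simp add: fps_numeral_fps_const)
  have scX: "sc c (Xi P) = sc c P ^ 3 - fps_const 3 * fps_const (P $ 2) * (fps_const (of_int c) * fps_X) ^ 2 * sc c P - sc c (Q2 P)"
    by (simp add: Xi_def sc_diff sc_mult sc_power sc_const sc_X)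
  have fn: "fps_const (- x) = - fps_const x" for x :: 'a by simp
  have f4: "fps_const (4 * x) = 4 * fps_const x" for x :: 'a
    by (simp add: fps_numeral_fps_const)
  have "Fib P c - fps_const (ivi c ^ 3) * sc c (Xi P) = 0"
    unfolding Fib_def scX
    apply (simp add: cS2_mult cS1_mult cS0_mult cS0_Yb[OF Q c] cS0_Yb[OF Q c'] cS2_Yb[OF Q c] cS1_Yb_free cS2_Yb_free
       cS_ys P0 P1 P1' i1 im1 ivi_neg sc_even[OF ev] cS1_mult' cS_Yb_free fn f4
       fps_const_mult[symmetric] fps_const_power[symmetric] del: fps_const_mult fps_const_neg fps_const_power)
    apply (simp only: fps_numeral_fps_const[symmetric])
    by (rule fib_alg[OF r1 r2])
  then show ?thesis by simp
qed

lemma prod_list_filter_upt: "prod_list (map D (filter (\<lambda>q. q \<noteq> j) [0..<N])) = prod D ({..<N} - {j})"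
proof -
  have "prod_list (map D (filter (\<lambda>q. q \<noteq> j) [0..<N])) = prod D (set (filter (\<lambda>q. q \<noteq> j) [0..<N]))"
    by (rule prod.distinct_set_conv_list[symmetric]) simp
  also have "set (filter (\<lambda>q. q \<noteq> j) [0..<N]) = {..<N} - {j}" by auto
  finally show ?thesis .
qed

lemma prod_list_upt: "prod_list (map D [0..<N]) = prod D {..<N}"
  by (metis atLeast_upt prod.distinct_set_conv_list distinct_upt)

lemma norm_lemma:
  fixes D U V \<sigma> :: "nat \<Rightarrow> 'b::comm_ring_1" and n :: "nat \<Rightarrow> nat"
  assumes D: "\<And>q. q < N \<Longrightarrow> D q = Z * s ^ n q * U q"
    and UV: "\<And>q. q < N \<Longrightarrow> U q * V q = 1"
    and N0: "N > 0" and nle: "\<And>q. q < N \<Longrightarrow> n q \<le> m" and mT: "m \<le> (\<Sum>q<N. n q)"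
    and H: "(\<Sum>j<N. \<sigma> j * prod_list (map D (filter (\<lambda>q. q \<noteq> j) [0..<N]))) = C * prod_list (map D [0..<N])"
  shows "Z ^ (N - 1) * s ^ ((\<Sum>q<N. n q) - m) * ((\<Sum>j<N. \<sigma> j * (s ^ (m - n j) * V j)) - C * (Z * s ^ m)) = 0"
proof -
  define T where "T = (\<Sum>q<N. n q)"
  define I where "I = {..<N}"
  have finI: "finite I" by (simp add: I_def)
  have PD: "prod D A = Z ^ card A * s ^ (sum n A) * prod U A" if "A \<subseteq> I" for A
  proof -
    have "prod D A = prod (\<lambda>q. Z * s ^ n q * U q) A" using that D by (intro prod.cong) (auto simp: I_def)
    also have "\<dots> = Z ^ card A * s ^ (sum n A) * prod U A" by (simp add: prod.distrib power_sum)
    finally show ?thesis .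
  qed
  have PUV: "prod U A * prod V A = 1" if "A \<subseteq> I" for A
  proof -
    have "prod U A * prod V A = prod (\<lambda>q. U q * V q) A" by (simp add: prod.distrib)
    also have "\<dots> = 1" using that UV by (intro prod.neutral) (auto simp: I_def)
    finally show ?thesis .
  qed
  have key: "prod D (I - {j}) * prod V I = Z ^ (N - 1) * s ^ (T - n j) * V j" if j: "j < N" for j
  proof -
    have jI: "j \<in> I" using j by (simp add: I_def)
    have "prod V I = V j * prod V (I - {j})" using jI finI by (simp add: prod.remove)
    moreover have "card (I - {j}) = N - 1" using jI by (simp add: I_def)
    moreover have "sum n (I - {j}) = T - n j" using jI finI by (simp add: T_def I_def sum_diff1_nat)
    ultimately have "prod D (I - {j}) * prod V I = Z ^ (N - 1) * s ^ (T - n j) * V j * (prod U (I - {j}) * prod V (I - {j}))"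
      using PD[of "I - {j}"] by (simp add: ac_simps)
    then show ?thesis using PUV[of "I - {j}"] by simp
  qed
  have key2: "prod D I * prod V I = Z ^ N * s ^ T"
    using PD[of I] PUV[of I] by (simp add: I_def T_def mult.assoc)
  have "(\<Sum>j<N. \<sigma> j * prod D (I - {j})) * prod V I = C * (prod D I * prod V I)"
    using H unfolding prod_list_filter_upt prod_list_upt I_def by (simp add: mult.assoc)
  then have E: "(\<Sum>j<N. \<sigma> j * (Z ^ (N - 1) * s ^ (T - n j) * V j)) = C * (Z ^ N * s ^ T)"
    using key key2 by (simp add: sum_distrib_right mult.assoc)
  have "Z ^ (N - 1) * s ^ (T - m) * ((\<Sum>j<N. \<sigma> j * (s ^ (m - n j) * V j)) - C * (Z * s ^ m))
      = (\<Sum>j<N. \<sigma> j * (Z ^ (N - 1) * s ^ (T - n j) * V j)) - C * (Z ^ N * s ^ T)"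
  proof -
    have a: "Z ^ (N - 1) * s ^ (T - m) * (\<sigma> j * (s ^ (m - n j) * V j)) = \<sigma> j * (Z ^ (N - 1) * s ^ (T - n j) * V j)"
      if "j < N" for j
    proof -
      have "T - n j = (T - m) + (m - n j)" using nle[OF that] mT by (simp add: T_def)
      then show ?thesis by (simp add: power_add ac_simps)
    qed
    have b: "Z ^ (N - 1) * s ^ (T - m) * (C * (Z * s ^ m)) = C * (Z ^ N * s ^ T)"
    proof (cases N)
      case 0 then show ?thesis using N0 by simp
    next
      case (Suc N') then show ?thesis using mT by (simp add: T_def power_add[symmetric] ac_simps)
    qed
    show ?thesis using a b by (simp add: right_diff_distrib sum_distrib_left)
  qed
  then show ?thesis using E by (simp add: T_def)
qed

definition v5 :: "nat \<Rightarrow> 'a::comm_ring_1 fps" where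
  "v5 i = lin (if i < 2 then 1 else if i = 2 then 2 else 0) (if i = 3 \<or> i = 4 then 1 else 0)"

definition wl :: "(int \<times> int) list list" where
  "wl = [[(1,0),(1,0),(2,0),(0,1),(0,1)],
 [(1,0),(1,0),(2,-1),(0,2),(0,1)],
 [(1,0),(1,0),(2,1),(0,2),(0,-1)],
 [(1,0),(1,0),(2,1),(-2,1),(2,0)],
 [(2,0),(-1,0),(3,0),(0,1),(0,1)],
 [(2,0),(-1,0),(3,-1),(0,2),(0,1)],
 [(2,0),(-1,0),(3,1),(0,2),(0,-1)],
 [(2,0),(-1,0),(3,1),(-3,1),(3,0)],
 [(2,0),(1,0),(1,0),(0,1),(0,1)],
 [(2,0),(1,0),(1,-1),(0,2),(0,1)],
 [(2,0),(1,0),(1,1),(0,2),(0,-1)],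
 [(2,0),(1,0),(1,1),(-1,1),(1,0)]]"

lemma v5_sum: "(\<Sum>i<5. of_int (w i) * v5 i) = (lin (w 0 + w 1 + 2 * w 2) (w 3 + w 4) :: 'a::comm_ring_1 fps)"
proof -
  have "(\<Sum>i<5. of_int (w i) * v5 i) = (lin (\<Sum>i<5. w i * (if i < 2 then 1 else if i = 2 then 2 else 0))
      (\<Sum>i<5. w i * (if i = 3 \<or> i = 4 then 1 else 0)) :: 'a fps)"
    unfolding v5_def by (rule lin_sum)
  also have "\<dots> = lin (w 0 + w 1 + 2 * w 2) (w 3 + w 4)"
    by (simp add: numeral_eq_Suc lessThan_Suc ac_simps)
  finally show ?thesis .
qed

lemma L_lin: "map (\<lambda>p. map (\<lambda>w. (\<Sum>i<5. of_int (w i) * v5 i)) (snd p)) Ltilde_data = map (map (\<lambda>(a,b). (lin a b :: 'a::comm_ring_1 fps))) wl"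
  by (simp add: v5_sum Ltilde_data_def Ltilde_signs_def Ltilde_weight_rows_def wl_def wv_def)


lemma L_eq:
  fixes f :: "'a::comm_ring_1 fps"
  assumes "equiv_genus_eq 5 f Ltilde_data c"
  shows "(\<Sum>j<12. of_int (Ltilde_signs ! j) * prod_list (map (\<lambda>q. prod_list (map (\<lambda>(a,b). Fac (lin a b) f) (wl ! q)))
            (filter (\<lambda>q. q \<noteq> j) [0..<12])))
       = fps_const (fps_const c) * prod_list (map (\<lambda>q. prod_list (map (\<lambda>(a,b). Fac (lin a b) f) (wl ! q))) [0..<12])"
proof -
  define DD where "DD = (\<lambda>q. prod_list (map (\<lambda>w. Fac (\<Sum>i<5. of_int (w i) * v5 i) f) (snd (Ltilde_data ! q))))"
  define DD' where "DD' = (\<lambda>q. prod_list (map (\<lambda>(a,b). Fac (lin a b) f) (wl ! q)))"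
  have len: "length Ltilde_data = 12" by (simp add: Ltilde_data_def Ltilde_signs_def Ltilde_weight_rows_def)
  have lenw: "length wl = 12" by (simp add: wl_def)
  have mf: "map fst Ltilde_data = Ltilde_signs" by (simp add: Ltilde_data_def Ltilde_signs_def Ltilde_weight_rows_def)
  have sg: "fst (Ltilde_data ! j) = Ltilde_signs ! j" if "j < 12" for j
    using that len mf by (metis nth_map)
  have DDe: "DD q = DD' q" if "q < 12" for q
  proof -
    have "map (\<lambda>w. (\<Sum>i<5. of_int (w i) * v5 i)) (snd (Ltilde_data ! q)) = map (\<lambda>(a,b). (lin a b :: 'a fps)) (wl ! q)"
      using arg_cong[OF L_lin, of "\<lambda>xs. xs ! q"] that len lenw by simp
    then have "map (\<lambda>L. Fac L f) (map (\<lambda>w. (\<Sum>i<5. of_int (w i) * v5 i)) (snd (Ltilde_data ! q)))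
             = map (\<lambda>L. Fac L f) (map (\<lambda>(a,b). (lin a b :: 'a fps)) (wl ! q))" by simp
    moreover have "(\<lambda>L. Fac L f) \<circ> (\<lambda>(a,b). (lin a b :: 'a fps)) = (\<lambda>(a,b). Fac (lin a b) f)"
      by (auto simp: fun_eq_iff)
    ultimately have "map (\<lambda>w. Fac (\<Sum>i<5. of_int (w i) * v5 i) f) (snd (Ltilde_data ! q)) = map (\<lambda>(a,b). Fac (lin a b) f) (wl ! q)"
      by (simp only: map_map o_def)
    then show ?thesis unfolding DD_def DD'_def by simp
  qed
  have H: "(\<Sum>j<12. of_int (fst (Ltilde_data ! j)) * prod_list (map DD (filter (\<lambda>q. q \<noteq> j) [0..<12])))
         = fps_const (fps_const c) * prod_list (map DD [0..<12])"
    using genus_spec[OF assms, of v5] len unfolding DD_def by simp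
  have m1: "prod_list (map DD (filter (\<lambda>q. q \<noteq> j) [0..<12])) = prod_list (map DD' (filter (\<lambda>q. q \<noteq> j) [0..<12]))" for j
    by (rule arg_cong[where f = prod_list], rule map_cong) (auto simp: DDe)
  have m2: "prod_list (map DD [0..<12]) = prod_list (map DD' [0..<12])"
    by (rule arg_cong[where f = prod_list], rule map_cong) (auto simp: DDe)
  show ?thesis using H unfolding m1 m2 DD'_def[symmetric]
    by (metis (no_types, lifting) sg sum.cong lessThan_iff)
qed

lemma lin_add: "(lin a b :: 'a::comm_ring_1 fps) + lin c d = lin (a + c) (b + d)"
  by (simp add: lin_def algebra_simps fps_const_add[symmetric] del: fps_const_add)

lemma Fac_rexp_add:
  assumes Q: "Q_algebra TYPE('a::comm_ring_1)"
  shows "Fac (lin a b) (rexp (\<alpha>::'a)) * Fac (lin c d) (rexp \<alpha>) = Fac (lin (a + c) (b + d)) (rexp \<alpha>)"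
  unfolding Fac_rexp[OF Q] rexp_add[OF Q_fps[OF Q]] lin_add[symmetric]
  by (simp add: distrib_left)

lemma Fac_rexp_00:
  assumes Q: "Q_algebra TYPE('a::comm_ring_1)"
  shows "Fac (lin 0 0) (rexp (\<alpha>::'a)) = 1"
  unfolding Fac_rexp[OF Q] using rexp_zero[OF Q_fps[OF Q]] by (simp add: lin_def)

definition nz :: "(int \<times> int) list \<Rightarrow> nat" where
  "nz ws = length (filter (\<lambda>(a,b). a = 0) ws)"

lemma Fac_wt:
  assumes Q: "Q_algebra TYPE('a::comm_ring_1)" and f: "f = rexp \<alpha> * (fps_X * gt)"
  shows "Fac (lin a b) (f :: 'a fps) = Fac (lin a b) (rexp \<alpha>) * fps_X * fps_const fps_X ^ (if a = 0 then 1 else 0) * uu gt (a, b)"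
proof (cases "a = 0")
  case True
  have e: "fps_const (lin 0 b :: 'a fps) = fps_const fps_X * fps_const (fps_const (of_int b))"
    by (simp add: lin_def mult.commute)
  show ?thesis using True unfolding f
    by (simp add: Fac_mult Fac_X uu_def e ac_simps del: fps_const_mult)
next
  case False
  then show ?thesis unfolding f by (simp add: Fac_mult Fac_X uu_def ac_simps)
qed

lemma Fac_list:
  assumes Q: "Q_algebra TYPE('a::comm_ring_1)" and f: "f = rexp \<alpha> * (fps_X * gt)"
  shows "prod_list (map (\<lambda>(a,b). Fac (lin a b) (f :: 'a fps)) ws)
       = Fac (lin (sum_list (map fst ws)) (sum_list (map snd ws))) (rexp \<alpha>) * fps_X ^ length ws
         * fps_const fps_X ^ nz ws * prod_list (map (uu gt) ws)"
proof (induction ws)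
  case Nil
  then show ?case by (simp add: Fac_rexp_00[OF Q] nz_def)
next
  case (Cons km ws)
  obtain a b where km: "km = (a, b)" by (cases km)
  have "prod_list (map (\<lambda>(a,b). Fac (lin a b) f) (km # ws))
      = (Fac (lin a b) (rexp \<alpha>) * fps_X * fps_const fps_X ^ (if a = 0 then 1 else 0) * uu gt (a, b))
      * (Fac (lin (sum_list (map fst ws)) (sum_list (map snd ws))) (rexp \<alpha>) * fps_X ^ length ws
         * fps_const fps_X ^ nz ws * prod_list (map (uu gt) ws))"
    using Cons km Fac_wt[OF Q f, of a b] by simp
  also have "\<dots> = (Fac (lin a b) (rexp \<alpha>) * Fac (lin (sum_list (map fst ws)) (sum_list (map snd ws))) (rexp \<alpha>))
      * (fps_X * fps_X ^ length ws) * (fps_const fps_X ^ (if a = 0 then 1 else 0) * fps_const fps_X ^ nz ws)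
      * (uu gt (a, b) * prod_list (map (uu gt) ws))"
    by (simp only: ac_simps)
  also have "\<dots> = Fac (lin (sum_list (map fst (km # ws))) (sum_list (map snd (km # ws)))) (rexp \<alpha>)
      * fps_X ^ length (km # ws) * fps_const fps_X ^ nz (km # ws) * prod_list (map (uu gt) (km # ws))"
    unfolding Fac_rexp_add[OF Q] using km by (simp add: nz_def power_add[symmetric])
  finally show ?case .
qed

lemma UV_list:
  assumes Q: "Q_algebra TYPE('a::comm_ring_1)" and inv: "gt * P = (1 :: 'a fps)"
    and nz: "\<forall>km\<in>set ws. fst km \<noteq> 0 \<or> snd km \<noteq> 0"
  shows "prod_list (map (uu gt) ws) * prod_list (map (yy P) ws) = 1"
  using nz
proof (induction ws)
  case Nil then show ?case by simp
next
  case (Cons km ws)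
  have IH: "prod_list (map (uu gt) ws) * prod_list (map (yy P) ws) = 1" using Cons by simp
  have h: "uu gt km * yy P km = 1" using Cons.prems uu_yy[OF Q inv, of km] by simp
  have "prod_list (map (uu gt) (km # ws)) * prod_list (map (yy P) (km # ws))
      = (uu gt km * yy P km) * (prod_list (map (uu gt) ws) * prod_list (map (yy P) ws))"
    by (simp add: ac_simps)
  also have "\<dots> = 1" by (simp only: IH h mult_1)
  finally show ?case .
qed

lemma cancel_X: "(fps_X :: 'b::comm_ring_1 fps) ^ k * A = 0 \<Longrightarrow> A = 0"
proof (rule fps_ext)
  fix n assume "fps_X ^ k * A = 0"
  then have "(fps_X ^ k * A) $ (n + k) = 0" by simp
  then show "A $ n = 0 $ n" by (simp add: fps_X_power_mult_nth)
qed

lemma cancel_s: "fps_const (fps_X :: 'a::comm_ring_1 fps) ^ k * A = 0 \<Longrightarrow> A = 0"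
proof (rule fps_ext)
  fix n assume "fps_const (fps_X :: 'a fps) ^ k * A = 0"
  then have "(fps_const (fps_X ^ k) * A) $ n = 0" by (simp add: fps_const_power)
  then have "fps_X ^ k * A $ n = 0" by simp
  then show "A $ n = 0 $ n" using cancel_X by simp
qed


lemma wl_facts: "\<forall>q<12. sum_list (map fst (wl ! q)) = 4 \<and> sum_list (map snd (wl ! q)) = 2 \<and> length (wl ! q) = 5
   \<and> nz (wl ! q) \<le> 2 \<and> (\<forall>km\<in>set (wl ! q). fst km \<noteq> 0 \<or> snd km \<noteq> 0)"
proof -
  have all12: "\<And>P. (\<forall>i<(12::nat). P i) \<longleftrightarrow> (\<forall>i\<in>set [0..<12]. P i)" by auto
  show ?thesis unfolding all12 by (simp add: wl_def nz_def upt_rec)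
qed

lemma nz_sum: "(\<Sum>q<12. nz (wl ! q)) = 18"
proof -
  have "(\<Sum>q<12. nz (wl ! q)) = sum_list (map (\<lambda>q. nz (wl ! q)) [0..<12])"
    by (simp add: sum_list_distinct_conv_sum_set atLeast_upt)
  also have "\<dots> = 18" by (simp add: wl_def nz_def upt_rec)
  finally show ?thesis .
qed

lemma L_norm:
  fixes f gt P :: "'a::comm_ring_1 fps"
  assumes Q: "Q_algebra TYPE('a)" and f: "f = rexp \<alpha> * (fps_X * gt)" and inv: "gt * P = 1"
    and eq: "equiv_genus_eq 5 f Ltilde_data c"
  shows "(\<Sum>j<12. of_int (Ltilde_signs ! j) * (fps_const fps_X ^ (2 - nz (wl ! j)) * prod_list (map (yy P) (wl ! j))))
       = fps_const (fps_const c) * (Fac (lin 4 2) (rexp \<alpha>) * fps_X ^ 5 * fps_const fps_X ^ 2)"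
proof -
  define E where "E = Fac (lin 4 2) (rexp \<alpha>)"
  define Z where "Z = E * fps_X ^ 5"
  define s :: "'a fps fps" where "s = fps_const fps_X"
  define W where "W = (\<Sum>j<12. of_int (Ltilde_signs ! j) * (s ^ (2 - nz (wl ! j)) * prod_list (map (yy P) (wl ! j))))"
  define C :: "'a fps fps" where "C = fps_const (fps_const c)"
  have D: "prod_list (map (\<lambda>(a,b). Fac (lin a b) f) (wl ! q)) = Z * s ^ nz (wl ! q) * prod_list (map (uu gt) (wl ! q))"
    if "q < 12" for q
    using Fac_list[OF Q f, of "wl ! q"] wl_facts that by (simp add: Z_def E_def s_def)
  have UV: "prod_list (map (uu gt) (wl ! q)) * prod_list (map (yy P) (wl ! q)) = 1" if "q < 12" for q
    using UV_list[OF Q inv] wl_facts that by simp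
  have "Z ^ (12 - 1) * s ^ ((\<Sum>q<12. nz (wl ! q)) - 2) * (W - C * (Z * s ^ 2)) = 0"
    unfolding W_def C_def
    by (rule norm_lemma[where D = "\<lambda>q. prod_list (map (\<lambda>(a,b). Fac (lin a b) f) (wl ! q))", OF D UV _ _ _ L_eq[OF eq]])
       (use wl_facts nz_sum in auto)
  then have h: "Z ^ 11 * s ^ 16 * (W - C * (Z * s ^ 2)) = 0" using nz_sum by simp
  define E' where "E' = rexp (- (fps_const \<alpha> * lin 4 2) :: 'a fps)"
  have EE: "E * E' = 1" unfolding E_def E'_def Fac_rexp[OF Q] by (rule rexp_inv[OF Q_fps[OF Q]])
  have "E' ^ 11 * (Z ^ 11 * s ^ 16 * (W - C * (Z * s ^ 2))) = (E * E') ^ 11 * (fps_X ^ 55 * (s ^ 16 * (W - C * (Z * s ^ 2))))"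
    unfolding Z_def by (simp add: power_mult_distrib power_mult[symmetric] ac_simps)
  then have "fps_X ^ 55 * (s ^ 16 * (W - C * (Z * s ^ 2))) = 0" using h EE by simp
  then have "s ^ 16 * (W - C * (Z * s ^ 2)) = 0" by (rule cancel_X)
  then have "W - C * (Z * s ^ 2) = 0" unfolding s_def by (rule cancel_s)
  then show ?thesis by (simp add: W_def C_def Z_def E_def s_def)
qed

lemma cS_sshift: "cS (j + k) (fps_const (fps_X :: 'a::comm_ring_1 fps) ^ k * A) = cS j A"
  by (rule fps_ext) (simp add: cS_nth fps_const_power fps_X_power_mult_nth)

lemma cS_sshift2: "n \<le> 2 \<Longrightarrow> cS 2 (fps_const (fps_X :: 'a::comm_ring_1 fps) ^ (2 - n) * A) = cS n A"
  using cS_sshift[of n "2 - n" A] by simp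

lemma cS0_X: "cS 0 (fps_X :: 'a::comm_ring_1 fps fps) = fps_X"
  by (rule fps_ext) (simp add: cS_nth fps_X_def)

lemma cS0_Xpow: "cS 0 ((fps_X :: 'a::comm_ring_1 fps fps) ^ k) = fps_X ^ k"
  by (induction k) (simp_all add: cS0_mult cS0_X cS_one0)

lemma L_sum:
  fixes P :: "'a::comm_ring_1 fps"
  shows "(\<Sum>j<12. of_int (Ltilde_signs ! j) * cS (nz (wl ! j)) (prod_list (map (yy P) (wl ! j))))
    = cS 0 (Yb P 1 0) * cS 0 (Yb P 1 0) * Fib P 2 + cS 0 (Yb P 2 0) * cS 0 (Yb P (-1) 0) * Fib P 3
      - cS 0 (Yb P 2 0) * cS 0 (Yb P 1 0) * Fib P 1"
  apply (simp add: numeral_eq_Suc lessThan_Suc wl_def Ltilde_signs_def nz_def yy_def cS_free_mult cS_Yb_free Fib_def)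
  by (simp add: algebra_simps)


lemma L_final:
  fixes f gt P :: "'a::comm_ring_1 fps"
  assumes Q: "Q_algebra TYPE('a)" and f: "f = rexp \<alpha> * (fps_X * gt)" and inv: "gt * P = 1"
    and eq: "equiv_genus_eq 5 f Ltilde_data c"
    and P0: "P $ 0 = 1" and P1: "P $ 1 = 0" and ev: "sc (-1) P = P"
  shows "P * P * (fps_const (ivi 2 ^ 3) * sc 2 (Xi P))
      - fps_const (ivi 2) * sc 2 P * P * (fps_const (ivi 3 ^ 3) * sc 3 (Xi P))
      - fps_const (ivi 2) * sc 2 P * P * Xi P = fps_const c * (sc 4 (rexp \<alpha>) * fps_X ^ 5)"
proof -
  have i1: "(ivi 1 :: 'a) = 1" by (rule ivi_1[OF Q])
  have im1: "(ivi (-1) :: 'a) = -1" by (simp only: ivi_neg i1)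
  have m1: "fps_const (-1::'a) = -1" by (metis fps_const_neg fps_const_1_eq_1)
  have "cS 2 (\<Sum>j<12. of_int (Ltilde_signs ! j) * (fps_const fps_X ^ (2 - nz (wl ! j)) * prod_list (map (yy P) (wl ! j))))
       = cS 2 (fps_const (fps_const c) * (Fac (lin 4 2) (rexp \<alpha>) * fps_X ^ 5 * fps_const fps_X ^ 2))"
    using L_norm[OF Q f inv eq] by simp
  moreover have "cS 2 (\<Sum>j<12. of_int (Ltilde_signs ! j) * (fps_const fps_X ^ (2 - nz (wl ! j)) * prod_list (map (yy P) (wl ! j))))
      = (\<Sum>j<12. of_int (Ltilde_signs ! j) * cS (nz (wl ! j)) (prod_list (map (yy P) (wl ! j))))"
    unfolding cS_sum cS_of_int using wl_facts by (intro sum.cong refl) (simp add: cS_sshift2 del: fps_const_power)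
  moreover have "cS 2 (fps_const (fps_const c) * (Fac (lin 4 2) (rexp \<alpha>) * fps_X ^ 5 * fps_const fps_X ^ 2))
      = fps_const c * (sc 4 (rexp \<alpha>) * fps_X ^ 5)"
  proof -
    have "cS 2 (fps_const (fps_X :: 'a fps) ^ (2 - 0) * (Fac (lin 4 2) (rexp \<alpha>) * fps_X ^ 5)) = cS 0 (Fac (lin 4 2) (rexp \<alpha>) * fps_X ^ 5)"
      by (rule cS_sshift2) simp
    then show ?thesis by (simp add: cS_const cS0_mult cS0_Fac cS0_Xpow ac_simps)
  qed
  ultimately have "cS 0 (Yb P 1 0) * cS 0 (Yb P 1 0) * Fib P 2 + cS 0 (Yb P 2 0) * cS 0 (Yb P (-1) 0) * Fib P 3
      - cS 0 (Yb P 2 0) * cS 0 (Yb P 1 0) * Fib P 1 = fps_const c * (sc 4 (rexp \<alpha>) * fps_X ^ 5)"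
    using L_sum[of P] by simp
  then show ?thesis
    using m1 by (simp add: Fib_eq[OF Q _ P0 P1 ev] cS0_Yb[OF Q] i1 im1 sc_1 ev algebra_simps)
qed

lemma Xi_low:
  fixes P :: "'a::comm_ring_1 fps"
  assumes P0: "P $ 0 = 1" and P1: "P $ 1 = 0" and P3: "P $ 3 = 0" and P5: "P $ 5 = 0" and k: "k \<le> 5"
  shows "Xi P $ k = 0"
proof -
  have P1': "P $ Suc 0 = 0" using P1 by simp
  have P3': "P $ Suc (Suc (Suc 0)) = 0" using P3 by (simp add: numeral_eq_Suc)
  have P5': "P $ Suc (Suc (Suc (Suc (Suc 0)))) = 0" using P5 by (simp add: numeral_eq_Suc)
  have P0': "P $ 0 = 1" by (rule P0)
  have "k = 0 \<or> k = 1 \<or> k = 2 \<or> k = 3 \<or> k = 4 \<or> k = 5" using k by auto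
  then show ?thesis
    by (elim disjE) (simp_all add: Xi_def Q2_def c2_def power3_eq_cube fps_mult_nth fps_X_power_mult_nth
        numeral_eq_Suc atLeast0AtMost atMost_Suc P0' P1' P3' P5' algebra_simps)
qed


lemma mult_nth_low: fixes A B :: "'a::comm_ring_1 fps" shows "(\<And>j. j \<le> n \<Longrightarrow> B $ j = 0) \<Longrightarrow> (A * B) $ n = 0"
  by (simp add: fps_mult_nth)

lemma mult_nth_top:
  fixes A B :: "'a::comm_ring_1 fps"
  assumes "\<And>i. 0 < i \<Longrightarrow> i \<le> N \<Longrightarrow> B $ (N - i) = 0"
  shows "(A * B) $ N = A $ 0 * B $ N"
proof -
  have "(A * B) $ N = (\<Sum>i=0..N. A $ i * B $ (N - i))" by (simp add: fps_mult_nth)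
  also have "\<dots> = A $ 0 * B $ (N - 0) + (\<Sum>i=Suc 0..N. A $ i * B $ (N - i))"
    by (simp add: sum.atLeast_Suc_atMost)
  also have "(\<Sum>i=Suc 0..N. A $ i * B $ (N - i)) = 0" using assms by (intro sum.neutral) auto
  finally show ?thesis by simp
qed

lemma ineq32: "n \<ge> 5 \<Longrightarrow> 27 * 2 ^ n < 4 * 3 ^ n + (108::nat)"
proof (induction n rule: dec_induct)
  case base then show ?case by simp
next
  case (step n)
  have "(4::nat) * 3 ^ 3 \<le> 4 * 3 ^ n" using step(1) by (intro mult_le_mono2 power_increasing) auto
  then show ?case using step by simp
qed

lemma Xi_zero:
  fixes P gt :: "'a::comm_ring_1 fps"
  assumes Q: "Q_algebra TYPE('a)" and inv: "gt * P = 1"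
    and P0: "P $ 0 = 1" and P1: "P $ 1 = 0" and P3: "P $ 3 = 0" and P5: "P $ 5 = 0"
    and H: "P * P * (fps_const (ivi 2 ^ 3) * sc 2 (Xi P))
      - fps_const (ivi 2) * sc 2 P * P * (fps_const (ivi 3 ^ 3) * sc 3 (Xi P))
      - fps_const (ivi 2) * sc 2 P * P * Xi P = fps_const c * (sc 4 (rexp \<alpha>) * fps_X ^ 5)"
  shows "c = 0 \<and> Xi P = 0"
proof -
  define X where "X = Xi P"
  have low: "X $ j = 0" if "j \<le> 5" for j using Xi_low[OF P0 P1 P3 P5 that] by (simp add: X_def)
  have lowsc: "sc k X $ j = 0" if "j \<le> 5" for j k using low[OF that] by (simp add: sc_def)
  have "(P * P * (fps_const (ivi 2 ^ 3) * sc 2 X)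
      - fps_const (ivi 2) * sc 2 P * P * (fps_const (ivi 3 ^ 3) * sc 3 X)
      - fps_const (ivi 2) * sc 2 P * P * X) $ 5 = 0"
    by (simp add: mult_nth_low lowsc low mult.assoc)
  moreover have "(fps_const c * (sc 4 (rexp \<alpha>) * fps_X ^ 5)) $ 5 = c"
    using rexp_0[OF Q] by (simp add: fps_X_power_mult_right_nth sc_def)
  ultimately have c0: "c = 0" using H by (simp add: X_def)
  define K where "K = fps_const (ivi 2) ^ 2 * (P * sc 2 X) - fps_const (ivi 3) ^ 3 * (sc 2 P * sc 3 X) - sc 2 P * X"
  have two: "2 * (ivi 2 :: 'a) = 1" using ivi[OF Q, of 2] by simp
  have H0: "fps_const (ivi 2) * P * K = 0" using H c0 unfolding K_def X_def
    by (simp add: algebra_simps power3_eq_cube power2_eq_square fps_const_power[symmetric] fps_const_mult[symmetric]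
         del: fps_const_power fps_const_mult)
  have "K = (2 * fps_const (ivi 2)) * (gt * P) * K" using two inv
    by (simp add: fps_numeral_fps_const)
  also have "\<dots> = 2 * gt * (fps_const (ivi 2) * P * K)" by (simp add: ac_simps)
  finally have K0: "K = 0" using H0 by simp
  have "X $ N = 0" for N
  proof (induction N rule: less_induct)
    case (less N)
    show ?case
    proof (cases "N \<le> 5")
      case True then show ?thesis by (rule low)
    next
      case False
      have z1: "sc k X $ (N - i) = 0" if "0 < i" "i \<le> N" for i k using less[of "N - i"] that by (simp add: sc_def)
      have z2: "X $ (N - i) = 0" if "0 < i" "i \<le> N" for i using less[of "N - i"] that by simp
      have a1: "(P * sc 2 X) $ N = P $ 0 * sc 2 X $ N" by (rule mult_nth_top[OF z1])
      have a2: "(sc 2 P * sc 3 X) $ N = sc 2 P $ 0 * sc 3 X $ N" by (rule mult_nth_top[OF z1])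
      have a3: "(sc 2 P * X) $ N = sc 2 P $ 0 * X $ N" by (rule mult_nth_top[OF z2])
      have "K $ N = ivi 2 ^ 2 * (P * sc 2 X) $ N - ivi 3 ^ 3 * (sc 2 P * sc 3 X) $ N - (sc 2 P * X) $ N"
        unfolding K_def fps_const_power by (simp only: fps_sub_nth fps_mult_left_const_nth)
      also have "\<dots> = (ivi 2 ^ 2 * of_int 2 ^ N - ivi 3 ^ 3 * of_int 3 ^ N - 1) * X $ N"
        unfolding a1 a2 a3 using P0 by (simp add: sc_def algebra_simps)
      finally have "K $ N = (ivi 2 ^ 2 * of_int 2 ^ N - ivi 3 ^ 3 * of_int 3 ^ N - 1) * X $ N" .
      then have e: "(ivi 2 ^ 2 * of_int 2 ^ N - ivi 3 ^ 3 * of_int 3 ^ N - 1) * X $ N = (0::'a)" using K0 by simp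
      have t3: "3 * (ivi 3 :: 'a) = 1" using ivi[OF Q, of 3] by simp
      define u where "u = (ivi 2 :: 'a)"
      define w where "w = (ivi 3 :: 'a)"
      define T2 where "T2 = (2 :: 'a) ^ N"
      define T3 where "T3 = (3 :: 'a) ^ N"
      have e': "(u ^ 2 * T2 - w ^ 3 * T3 - 1) * X $ N = 0" using e by (simp add: u_def w_def T2_def T3_def)
      have "108 * (u ^ 2 * T2 - w ^ 3 * T3 - 1) = 27 * (2 * u) ^ 2 * T2 - 4 * (3 * w) ^ 3 * T3 - 108"
        by (simp add: algebra_simps power2_eq_square power3_eq_cube)
      also have "\<dots> = 27 * T2 - 4 * T3 - 108" using two t3 by (simp add: u_def w_def)
      finally have r: "108 * (u ^ 2 * T2 - w ^ 3 * T3 - 1) = 27 * T2 - 4 * T3 - 108" .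
      define m :: nat where "m = 4 * 3 ^ N + 108 - 27 * 2 ^ N"
      have le: "27 * 2 ^ N \<le> 4 * 3 ^ N + (108::nat)" using ineq32[of N] False by simp
      have mpos: "m > 0" using ineq32[of N] False by (simp add: m_def)
      have "(of_nat m :: 'a) = of_nat (4 * 3 ^ N + 108) - of_nat (27 * 2 ^ N)"
        unfolding m_def by (rule of_nat_diff[OF le])
      also have "\<dots> = 4 * T3 + 108 - 27 * T2"
        unfolding T2_def T3_def by (simp only: of_nat_add of_nat_mult of_nat_power of_nat_numeral)
      finally have mm: "(of_nat m :: 'a) = 4 * T3 + 108 - 27 * T2" .
      have "of_nat m * X $ N = - (108 * ((u ^ 2 * T2 - w ^ 3 * T3 - 1) * X $ N))"
        unfolding mm mult.assoc[symmetric] r by (simp add: algebra_simps)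
      also have "\<dots> = 0" by (simp only: e' mult_zero_right minus_zero)
      finally have hm: "of_nat m * X $ N = 0" .
      show ?thesis by (rule natinv_cancel[OF Q mpos hm])
    qed
  qed
  then have "X = 0" by (simp add: fps_eq_iff)
  then show ?thesis using c0 by (simp add: X_def)
qed

lemma two_choose: "2 * (Suc n choose 2) = Suc n * n"
  by (simp add: choose_two)

lemma Q2_rel: "2 * Q2 P = fps_X ^ 2 * fps_deriv (fps_deriv P) - 2 * fps_X * fps_deriv P + 2 * (P :: 'a::comm_ring_1 fps)"
proof (rule fps_ext)
  fix N
  show "(2 * Q2 P) $ N = (fps_X ^ 2 * fps_deriv (fps_deriv P) - 2 * fps_X * fps_deriv P + 2 * P) $ N"
  proof (cases N)
    case 0 then show ?thesis by (simp add: Q2_def c2_def fps_X_power_mult_nth)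
  next
    case (Suc M)
    show ?thesis
    proof (cases M)
      case 0 then show ?thesis using Suc by (simp add: Q2_def c2_def fps_X_power_mult_nth binomial_eq_0)
    next
      case (Suc n)
      have e: "(of_nat (2 * (Suc n choose 2)) :: 'a) = of_nat (Suc n * n)" by (simp only: two_choose)
      have cN: "c2 N = Suc n choose 2" using Suc \<open>N = Suc M\<close> by (simp add: c2_def)
      have "(2 * Q2 P) $ N = 2 * (of_nat (c2 N) * P $ N)"
        by (simp only: fps_numeral_fps_const fps_mult_left_const_nth) (simp add: Q2_def)
      also have "\<dots> = of_nat (2 * (Suc n choose 2)) * P $ N" unfolding cN by simp
      also have "\<dots> = of_nat (Suc n * n) * P $ N" by (simp only: e)
      also have "\<dots> = (fps_X ^ 2 * fps_deriv (fps_deriv P) - 2 * fps_X * fps_deriv P + 2 * P) $ N"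
        using Suc \<open>N = Suc M\<close> by (simp only: fps_numeral_fps_const) (simp add: fps_X_power_mult_nth numeral_2_eq_2 algebra_simps)
      finally show ?thesis .
    qed
  qed
qed


lemma ode_alg:
  fixes p p1 p2 x c :: "'b::comm_ring_1"
  assumes R: "x ^ 2 * p2 = 2 * p ^ 3 - c * x ^ 2 * p - 2 * p + 2 * x * p1"
  shows "x * (2 * (p - x * p1) * (- (x * p2)) - 4 * p ^ 3 * p1 + c * (2 * x * p ^ 2 + x ^ 2 * (2 * p * p1)))
       = 4 * ((p - x * p1) ^ 2 - p ^ 4 + c * x ^ 2 * p ^ 2)"
proof -
  have "x * (2 * (p - x * p1) * (- (x * p2)) - 4 * p ^ 3 * p1 + c * (2 * x * p ^ 2 + x ^ 2 * (2 * p * p1)))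
      = - 2 * (p - x * p1) * (x ^ 2 * p2) + x * (- 4 * p ^ 3 * p1 + c * (2 * x * p ^ 2 + x ^ 2 * (2 * p * p1)))"
    by (simp add: algebra_simps power2_eq_square)
  also have "\<dots> = - 2 * (p - x * p1) * (2 * p ^ 3 - c * x ^ 2 * p - 2 * p + 2 * x * p1)
      + x * (- 4 * p ^ 3 * p1 + c * (2 * x * p ^ 2 + x ^ 2 * (2 * p * p1)))" by (simp only: R)
  also have "\<dots> = 4 * ((p - x * p1) ^ 2 - p ^ 4 + c * x ^ 2 * p ^ 2)"
    by (simp add: algebra_simps power2_eq_square power3_eq_cube power4_eq_xxxx)
  finally show ?thesis .
qed

lemma quartic:
  fixes H :: "'a::comm_ring_1 fps"
  assumes Q: "Q_algebra TYPE('a)" and e: "fps_X * fps_deriv H = 4 * H"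
  shows "H = fps_const (H $ 4) * fps_X ^ 4"
proof (rule fps_ext)
  fix N
  have c: "of_nat N * H $ N = 4 * H $ N"
  proof (cases N)
    case 0
    have "(fps_X * fps_deriv H) $ 0 = (4 * H) $ 0" using e by simp
    then have "0 = 4 * H $ 0" by (simp only: fps_numeral_fps_const) simp
    then show ?thesis using 0 by simp
  next
    case (Suc n)
    have "(fps_X * fps_deriv H) $ N = (4 * H) $ N" using e by simp
    then show ?thesis using Suc by (simp only: fps_numeral_fps_const) (simp add: mult.commute)
  qed
  show "H $ N = (fps_const (H $ 4) * fps_X ^ 4) $ N"
  proof (cases "N = 4")
    case True then show ?thesis by (simp add: fps_X_power_mult_right_nth)
  next
    case False
    have "H $ N = 0"
    proof (cases "N < 4")
      case True
      have "of_nat (4 - N) * H $ N = 4 * H $ N - of_nat N * H $ N" using True by (simp add: of_nat_diff algebra_simps)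
      then have h: "of_nat (4 - N) * H $ N = (0::'a)" using c by simp
      have pos: "4 - N > 0" using True by simp
      show ?thesis by (rule natinv_cancel[OF Q pos h])
    next
      case False2: False
      have "of_nat (N - 4) * H $ N = of_nat N * H $ N - 4 * H $ N" using False2 by (simp add: of_nat_diff algebra_simps)
      then have h: "of_nat (N - 4) * H $ N = (0::'a)" using c by simp
      have pos: "N - 4 > 0" using False False2 by simp
      show ?thesis by (rule natinv_cancel[OF Q pos h])
    qed
    then show ?thesis using False by (simp add: fps_X_power_mult_right_nth)
  qed
qed

lemma sn_from_Xi:
  fixes g gt P :: "'a::comm_ring_1 fps"
  assumes Q: "Q_algebra TYPE('a)" and gdef: "g = fps_X * gt" and inv: "gt * P = 1" and gt0: "gt $ 0 = 1"
    and Xi0: "Xi P = 0"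
  shows "\<exists>\<epsilon>. is_sn (3 * P $ 2) \<epsilon> g"
proof -
  define c where "c = fps_const (2 * (3 * P $ 2))"
  define P1 where "P1 = fps_deriv P"
  define P2 where "P2 = fps_deriv P1"
  define D where "D = P - fps_X * P1"
  define H where "H = D ^ 2 - P ^ 4 + c * fps_X ^ 2 * P ^ 2"
  have c2: "c = 2 * fps_const (3 * P $ 2)"
    by (simp add: c_def fps_numeral_fps_const)
  have Q2e: "Q2 P = P ^ 3 - fps_const (3 * P $ 2) * fps_X ^ 2 * P" using Xi0 by (simp add: Xi_def)
  have R: "fps_X ^ 2 * P2 = 2 * P ^ 3 - c * fps_X ^ 2 * P - 2 * P + 2 * fps_X * P1"
  proof -
    have "2 * Q2 P + 2 * fps_X * P1 - 2 * P = fps_X ^ 2 * P2"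
      unfolding P2_def P1_def by (subst Q2_rel) (simp add: algebra_simps)
    then have "fps_X ^ 2 * P2 = 2 * Q2 P + 2 * fps_X * P1 - 2 * P" by simp
    then show ?thesis unfolding Q2e c2 by (simp add: algebra_simps)
  qed
  have dD: "fps_deriv D = - (fps_X * P2)" by (simp add: D_def P2_def P1_def fps_deriv_mult)
  have dH: "fps_deriv H = 2 * D * (- (fps_X * P2)) - 4 * P ^ 3 * P1 + c * (2 * fps_X * P ^ 2 + fps_X ^ 2 * (2 * P * P1))"
    unfolding H_def using dD by (simp add: fps_deriv_power fps_deriv_mult c_def P1_def algebra_simps power2_eq_square power3_eq_cube fps_numeral_fps_const fps_const_neg[symmetric] del: fps_const_neg)
  have "fps_X * fps_deriv H = fps_X * (2 * (P - fps_X * P1) * (- (fps_X * P2)) - 4 * P ^ 3 * P1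
        + c * (2 * fps_X * P ^ 2 + fps_X ^ 2 * (2 * P * P1)))"
    by (simp only: dH D_def)
  also have "\<dots> = 4 * ((P - fps_X * P1) ^ 2 - P ^ 4 + c * fps_X ^ 2 * P ^ 2)" by (rule ode_alg[OF R])
  also have "\<dots> = 4 * H" by (simp only: H_def D_def)
  finally have "fps_X * fps_deriv H = 4 * H" .
  then have Hq: "H = fps_const (H $ 4) * fps_X ^ 4" by (rule quartic[OF Q])
  have dinv: "fps_deriv gt * P = - (gt * P1)"
  proof -
    have "fps_deriv (gt * P) = 0" using inv by simp
    then show ?thesis by (simp add: fps_deriv_mult P1_def algebra_simps add_eq_0_iff)
  qed
  have gP: "fps_deriv g * P ^ 2 = D"
  proof -
    have "fps_deriv g * P ^ 2 = P * (gt * P) + fps_X * P * (fps_deriv gt * P)"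
      by (simp add: gdef fps_deriv_mult algebra_simps power2_eq_square)
    also have "\<dots> = P - fps_X * P1 * (gt * P)" using inv dinv by (simp add: algebra_simps)
    finally show ?thesis using inv by (simp add: D_def)
  qed
  have "fps_deriv g ^ 2 = fps_deriv g ^ 2 * (gt * P) ^ 4" using inv by simp
  also have "\<dots> = (fps_deriv g * P ^ 2) ^ 2 * gt ^ 4" by (simp add: algebra_simps power2_eq_square power4_eq_xxxx)
  also have "\<dots> = D ^ 2 * gt ^ 4" by (simp add: gP)
  also have "D ^ 2 = H + P ^ 4 - c * fps_X ^ 2 * P ^ 2" by (simp add: H_def)
  also have "(H + P ^ 4 - c * fps_X ^ 2 * P ^ 2) * gt ^ 4
      = fps_const (H $ 4) * (fps_X * gt) ^ 4 + (gt * P) ^ 4 - c * (fps_X * gt) ^ 2 * (gt * P) ^ 2"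
    by (subst Hq) (simp add: algebra_simps power2_eq_square power4_eq_xxxx)
  also have "\<dots> = 1 - c * g ^ 2 + fps_const (H $ 4) * g ^ 4" using inv by (simp add: gdef)
  finally have ode: "fps_deriv g ^ 2 = 1 - fps_const (2 * (3 * P $ 2)) * g ^ 2 + fps_const (H $ 4) * g ^ 4"
    by (simp add: c_def)
  have "g $ 0 = 0" by (simp add: gdef)
  moreover have "g $ 1 = 1" using gt0 by (simp add: gdef)
  ultimately have "is_sn (3 * P $ 2) (H $ 4) g" using ode by (simp add: is_sn_def)
  then show ?thesis by blast
qed

theorem theorem2p2:
  fixes f :: "'a::comm_ring_1 fps"
  assumes QA: "Q_algebra TYPE('a)"
    and f_exp: "fps_nth f 0 = 0" "fps_nth f 1 = 1"
    and rigid_S6: "rigid_on 2 f S6_data"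
    and S6_zero: "equiv_genus_eq 2 f S6_data 0"
    and rigid_L: "rigid_on 5 f Ltilde_data"
  shows "\<exists>\<alpha> \<delta> \<epsilon> s. is_sn \<delta> \<epsilon> s \<and> f = rexp \<alpha> * s"
proof -
  define \<alpha> where "\<alpha> = f $ 2"
  define g where "g = rexp (- \<alpha>) * f"
  have odd: "sc (-1) g = - g" using odd_g[OF QA f_exp S6_zero] by (simp add: g_def \<alpha>_def)
  have fg: "f = rexp \<alpha> * g" using rexp_inv[OF QA, of \<alpha>] by (simp add: g_def mult.assoc[symmetric])
  have g0: "g $ 0 = 0" using f_exp by (simp add: g_def)
  have g1: "g $ 1 = 1" unfolding g_def using f_exp rexp_0[OF QA] by (simp add: fps_mult_nth numeral_2_eq_2)
  define gt where "gt = Abs_fps (\<lambda>n. g $ Suc n)"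
  have ggt: "g = fps_X * gt"
  proof (rule fps_ext)
    fix n show "g $ n = (fps_X * gt) $ n" using g0 by (cases n) (simp_all add: gt_def)
  qed
  have gt0: "gt $ 0 = 1" using g1 by (simp add: gt_def)
  define P where "P = fps_right_inverse gt 1"
  have inv: "gt * P = 1" unfolding P_def by (rule fps_right_inverse) (simp add: gt0)
  have P0: "P $ 0 = 1"
  proof -
    have "(gt * P) $ 0 = 1" using inv by simp
    then show ?thesis using gt0 by simp
  qed
  have evgt: "sc (-1) gt = gt"
  proof -
    have m1: "fps_const (-1::'a) = -1" by (metis fps_const_neg fps_const_1_eq_1)
    have "- (fps_X * sc (-1) gt) = - (fps_X * gt)"
      using odd unfolding ggt by (simp add: sc_mult sc_X m1)
    then have "fps_X ^ 1 * (sc (-1) gt - gt) = 0" by (simp add: algebra_simps)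
    then show ?thesis using cancel_X by fastforce
  qed
  have ev: "sc (-1) P = P"
  proof -
    have "sc (-1) gt * sc (-1) P = 1" using inv by (metis sc_mult sc_one)
    then have i2: "gt * sc (-1) P = 1" using evgt by simp
    have "P = (gt * P) * sc (-1) P" using i2 by (simp add: ac_simps)
    then show ?thesis using inv by simp
  qed
  have Podd: "P $ n = 0" if "odd n" for n
  proof -
    have "(sc (-1) P) $ n = P $ n" using ev by simp
    then have "- P $ n = P $ n" using that by (simp add: sc_def)
    then have h2: "of_nat 2 * P $ n = (0::'a)" by (simp add: algebra_simps)
    have pos: "(2::nat) > 0" by simp
    show ?thesis by (rule natinv_cancel[OF QA pos h2])
  qed
  obtain c where eqL: "equiv_genus_eq 5 f Ltilde_data c" using rigid_L by (auto simp: rigid_on_def)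
  have fform: "f = rexp \<alpha> * (fps_X * gt)" using fg ggt by simp
  have P1: "P $ 1 = 0" by (rule Podd) simp
  have P3: "P $ 3 = 0" by (rule Podd) simp
  have P5: "P $ 5 = 0" by (rule Podd) simp
  have LF: "P * P * (fps_const (ivi 2 ^ 3) * sc 2 (Xi P))
      - fps_const (ivi 2) * sc 2 P * P * (fps_const (ivi 3 ^ 3) * sc 3 (Xi P))
      - fps_const (ivi 2) * sc 2 P * P * Xi P = fps_const c * (sc 4 (rexp \<alpha>) * fps_X ^ 5)"
    by (rule L_final[OF QA fform inv eqL P0 P1 ev])
  have "c = 0 \<and> Xi P = 0" by (rule Xi_zero[OF QA inv P0 P1 P3 P5 LF])
  then have Xi0: "Xi P = 0" by simp
  obtain \<epsilon> where "is_sn (3 * P $ 2) \<epsilon> g" using sn_from_Xi[OF QA ggt inv gt0 Xi0] by blast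
  then show ?thesis using fg by blast
qed

end
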